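(* Let $\gamma>0$ and $p\in[2,\infty]$. For every $t>0$, $e^{(i+\gamma)tH}$ maps $L^p(\mathbb{R})$ into $L^2(\mathbb{R})$, and there exists a constant $C_{\gamma,p}$ such that for all $t>0$ and all $f\in L^p(\mathbb{R})$, $$|e^{(i+\gamma)tH}f|_{L^2(\mathbb{R})}\le C_{\gamma,p}\,t^{-\frac12+\frac1p}|f|_{L^p(\mathbb{R})}.$$
   Context: $H=\partial_x^2-x^2$, self-adjoint on $L^2(\mathbb{R};\mathbb{C})$ with spectrum $\{-(2n+1):n\ge0\}$; $e^{(i+\gamma)tH}$ is the associated semigroup. *)

theory Defs
  imports "HOL-Analysis.Analysis" "HOL-Probability.Essential_Supremum"
begin

fun hermite_poly :: "nat \<Rightarrow> real \<Rightarrow> real" where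
  "hermite_poly 0 x = 1"
| "hermite_poly (Suc 0) x = 2 * x"
| "hermite_poly (Suc (Suc n)) x =
     2 * x * hermite_poly (Suc n) x - 2 * real (Suc n) * hermite_poly n x"

text \<open>L^2-normalised Hermite functions; H h_n = -(2n+1) h_n for H = d^2/dx^2 - x^2.
  They form an orthonormal eigenbasis of L^2(R).\<close>
definition hermite_fun :: "nat \<Rightarrow> real \<Rightarrow> real" where
  "hermite_fun n x =
     hermite_poly n x * exp (- (x^2) / 2) / sqrt (2 ^ n * fact n * sqrt pi)"

text \<open>Hermite coefficient of f (well defined for f in L^p, since h_n is Schwartz).\<close>
definition hermite_coeff :: "(real \<Rightarrow> complex) \<Rightarrow> nat \<Rightarrow> complex" where
  "hermite_coeff f n = integral\<^sup>L lborel (\<lambda>x. f x * complex_of_real (hermite_fun n x))"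

definition memLp :: "ereal \<Rightarrow> (real \<Rightarrow> complex) \<Rightarrow> bool" where
  "memLp p f \<longleftrightarrow> f \<in> borel_measurable lborel \<and>
     (if p = \<infinity> then esssup lborel (\<lambda>x. ereal (norm (f x))) < \<infinity>
      else integrable lborel (\<lambda>x. norm (f x) powr real_of_ereal p))"

definition Lp_norm :: "ereal \<Rightarrow> (real \<Rightarrow> complex) \<Rightarrow> real" where
  "Lp_norm p f =
     (if p = \<infinity> then real_of_ereal (esssup lborel (\<lambda>x. ereal (norm (f x))))
      else (integral\<^sup>L lborel (\<lambda>x. norm (f x) powr real_of_ereal p))
             powr (1 / real_of_ereal p))"

definition inv_exp :: "ereal \<Rightarrow> real" where
  "inv_exp p = (if p = \<infinity> then 0 else 1 / real_of_ereal p)"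

text \<open>Spectral definition of e^(zH) applied to f: the function g in L^2 which is the
  L^2 limit of the partial sums  sum_(n<N) e^(-z(2n+1)) <f,h_n> h_n .\<close>
definition semigroup_image :: "complex \<Rightarrow> (real \<Rightarrow> complex) \<Rightarrow> (real \<Rightarrow> complex) \<Rightarrow> bool" where
  "semigroup_image z f g \<longleftrightarrow> memLp 2 g \<and>
     (\<lambda>N. Lp_norm 2 (\<lambda>x. g x - (\<Sum>n<N. exp (- z * of_nat (2 * n + 1)) *
                          hermite_coeff f n * complex_of_real (hermite_fun n x))))
       \<longlonglongrightarrow> 0"

end

theory Submission
  imports Defs "HOL-Probability.Distributions"
begin

abbreviation H where "H \<equiv> hermite_poly"

lemma H_xrec: "x * H n x = H (Suc n) x / 2 + real n * H (n - 1) x"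
proof (cases n)
  case (Suc m)
  have "H (Suc (Suc m)) x = 2 * x * H (Suc m) x - 2 * real (Suc m) * H m x" by simp
  then show ?thesis using Suc by (simp add: field_simps)
qed simp

lemma H_x2: "(1 + x^2) * H n x = H (n+2) x / 4 + (real n + 3/2) * H n x
   + real n * (real n - 1) * H (n - 2) x"
proof -
  have "(1 + x^2) * H n x = H n x + x * (x * H n x)" by (simp add: algebra_simps power2_eq_square)
  also have "\<dots> = H n x + x * (H (Suc n) x / 2 + real n * H (n - 1) x)" by (simp add: H_xrec)
  also have "\<dots> = H n x + (x * H (Suc n) x) / 2 + real n * (x * H (n - 1) x)" by (simp add: algebra_simps)
  also have "\<dots> = H (n+2) x / 4 + (real n + 3/2) * H n x + real n * (real n - 1) * H (n - 2) x"
  proof -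
    have e1: "x * H (Suc n) x = H (n+2) x / 2 + real (Suc n) * H n x"
      using H_xrec[of x "Suc n"] by simp
    have e2: "real n * (x * H (n - 1) x) = real n * (H n x / 2 + (real n - 1) * H (n - 2) x)"
    proof (cases n)
      case (Suc m)
      then show ?thesis using H_xrec[of x m] by (simp add: of_nat_diff)
    qed simp
    show ?thesis unfolding e1 e2 by (simp add: field_simps del: hermite_poly.simps)
  qed
  finally show ?thesis .
qed

lemma H_cont: "continuous_on UNIV (H n)"
proof (induction n rule: less_induct)
  case (less n)
  show ?case
  proof (cases n)
    case (Suc m)
    then show ?thesis using less
      by (cases m) (auto intro!: continuous_intros)
  qed (auto intro!: continuous_intros)
qed

lemma H_measurable[measurable]: "H n \<in> borel_measurable borel"
  using H_cont by (rule borel_measurable_continuous_onI)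

definition G :: "nat \<Rightarrow> real" where "G k = (\<integral>x. x^k * exp (-(x^2)) \<partial>lborel)"

lemma gm_even: "has_bochner_integral lborel (\<lambda>x::real. x^(2*k) * exp (-(x^2)))
   (sqrt pi * (fact (2 * k) / (2 ^ (2 * k) * fact k)))"
proof -
  have "has_bochner_integral lborel (\<lambda>x::real. exp (-x\<^sup>2)*x^(2 * k))
      (2 *\<^sub>R ((sqrt pi / 2) * (fact (2 * k) / (2 ^ (2 * k) * fact k))))"
    by (rule has_bochner_integral_even_function[OF gaussian_moment_even_pos[where k=k]]) simp
  then show ?thesis by (simp add: mult.commute)
qed

lemma gm_odd: "has_bochner_integral lborel (\<lambda>x::real. x^(2*k+1) * exp (-(x^2))) 0"
proof -
  have "has_bochner_integral lborel (\<lambda>x::real. exp (-x\<^sup>2)*x^(2 * k + 1)) 0"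
    by (rule has_bochner_integral_odd_function[OF gaussian_moment_odd_pos[where k=k]]) simp
  then show ?thesis by (simp add: mult.commute)
qed

lemma gm_int: "integrable lborel (\<lambda>x::real. x^k * exp (-(x^2)))"
proof (cases "even k")
  case True then obtain j where "k = 2*j" by blast
  then show ?thesis using integrable.intros[OF gm_even[of j]] by simp
next
  case False then obtain j where "k = 2*j+1" using oddE by blast
  then show ?thesis using integrable.intros[OF gm_odd[of j]] by simp
qed

lemma G_odd: "G (2*j+1) = 0"
  using gm_odd[of j] unfolding G_def by (simp add: has_bochner_integral_integral_eq)

lemma G_even: "G (2*j) = sqrt pi * (fact (2 * j) / (2 ^ (2 * j) * fact j))"
  using gm_even[of j] unfolding G_def by (simp add: has_bochner_integral_integral_eq)

lemma G_0: "G 0 = sqrt pi"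
  using G_even[of 0] by simp

lemma G_rec: "G (k+2) = (real k + 1) / 2 * G k"
proof (cases "even k")
  case True then obtain j where k: "k = 2*j" by blast
  have "G (k+2) = G (2*(j+1))" using k by simp
  also have "\<dots> = sqrt pi * (fact (2 * (j+1)) / (2 ^ (2 * (j+1)) * fact (j+1)))" by (rule G_even)
  also have "\<dots> = (real k + 1) / 2 * (sqrt pi * (fact (2 * j) / (2 ^ (2 * j) * fact j)))"
  proof -
    have a: "fact (2 * (j+1)) = (real j+1) * (2*(2*real j+1) * (fact (2*j) :: real))"
      by (simp add: fact_Suc algebra_simps)
    have b: "(2::real) ^ (2 * (j+1)) * fact (j+1) = (real j+1) * (4 * 2^(2*j) * fact j)"
      by (simp add: power_add algebra_simps)
    have "fact (2 * (j+1)) / (2 ^ (2 * (j+1)) * fact (j+1)) =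
        (2*(2*real j+1) * (fact (2*j) :: real)) / (4 * 2^(2*j) * fact j)"
      unfolding a b by (rule mult_divide_mult_cancel_left) simp
    also have "\<dots> = (real k + 1) / 2 * (fact (2 * j) / (2 ^ (2 * j) * fact j))"
      unfolding k by (simp add: field_simps)
    finally show ?thesis by simp
  qed
  also have "\<dots> = (real k + 1) / 2 * G k" using k G_even by simp
  finally show ?thesis .
next
  case False then obtain j where k: "k = 2*j+1" using oddE by blast
  have "G (k+2) = G (2*(j+1)+1)" using k by simp
  then show ?thesis using G_odd[of "j+1"] G_odd[of j] k by simp
qed

lemma H_int: "integrable lborel (\<lambda>x. H n x * x^k * exp (-(x^2)))"
proof (induction n arbitrary: k rule: less_induct)
  case (less n)
  show ?case
  proof (cases n)
    case 0 then show ?thesis using gm_int[of k] by simp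
  next
    case (Suc m)
    show ?thesis
    proof (cases m)
      case 0
      have "integrable lborel (\<lambda>x::real. 2 * (x^(Suc k) * exp (-(x^2))))"
        using gm_int[of "Suc k"] by simp
      then show ?thesis using Suc 0 by (simp add: algebra_simps)
    next
      case (Suc j)
      have i1: "integrable lborel (\<lambda>x. H (Suc j) x * x^(Suc k) * exp (-(x^2)))"
        using less[of "Suc j" "Suc k"] \<open>n = Suc m\<close> Suc by simp
      have i2: "integrable lborel (\<lambda>x. H j x * x^k * exp (-(x^2)))"
        using less[of j k] \<open>n = Suc m\<close> Suc by simp
      have "integrable lborel (\<lambda>x. 2 * (H (Suc j) x * x^(Suc k) * exp (-(x^2)))
              - 2 * real (Suc j) * (H j x * x^k * exp (-(x^2))))"
        using i1 i2 by auto
      then show ?thesis using \<open>n = Suc m\<close> Suc by (simp add: algebra_simps)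
    qed
  qed
qed

definition J :: "nat \<Rightarrow> nat \<Rightarrow> real" where
  "J n k = (\<integral>x. H n x * x^k * exp (-(x^2)) \<partial>lborel)"

lemma J_rec: "J (Suc (Suc n)) k = 2 * J (Suc n) (Suc k) - 2 * real (Suc n) * J n k"
proof -
  have "J (Suc (Suc n)) k = (\<integral>x. 2 * (H (Suc n) x * x^(Suc k) * exp (-(x^2)))
              - 2 * real (Suc n) * (H n x * x^k * exp (-(x^2))) \<partial>lborel)"
    unfolding J_def by (rule Bochner_Integration.integral_cong) (auto simp: algebra_simps)
  also have "\<dots> = 2 * J (Suc n) (Suc k) - 2 * real (Suc n) * J n k"
    unfolding J_def using H_int[of "Suc n" "Suc k"] H_int[of n k] by simp
  finally show ?thesis .
qed

lemma J_0: "J 0 k = G k" unfolding J_def G_def by simp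
lemma J_1: "J (Suc 0) k = 2 * G (Suc k)"
proof -
  have "J (Suc 0) k = (\<integral>x. 2 * (x^(Suc k) * exp (-(x^2))) \<partial>lborel)"
    unfolding J_def by (rule Bochner_Integration.integral_cong) (auto simp: algebra_simps)
  also have "\<dots> = 2 * G (Suc k)" unfolding G_def by (rule integral_mult_right_zero)
  finally show ?thesis .
qed

lemma G_odd': "odd k \<Longrightarrow> G k = 0"
  using G_odd by (metis oddE)

lemma J_formula: "J n k = (if n \<le> k then fact k / fact (k - n) * G (k - n) else 0)"
proof (induction n arbitrary: k rule: less_induct)
  case (less n)
  show ?case
  proof (cases n)
    case 0 then show ?thesis by (simp add: J_0)
  next
    case (Suc m)
    show ?thesis
    proof (cases m)
      case 0
      show ?thesis
      proof (cases k)
        case 0 then show ?thesis using \<open>n = Suc m\<close> \<open>m = 0\<close> J_1 G_odd[of 0] by simp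
      next
        case (Suc i)
        have "G (Suc k) = (real i + 1) / 2 * G i" using G_rec[of i] Suc by simp
        moreover have "fact (Suc i) / fact i = (real i + 1 :: real)" by (simp add: fact_Suc)
        ultimately show ?thesis using \<open>n = Suc m\<close> \<open>m = 0\<close> J_1 Suc by (simp add: algebra_simps)
      qed
    next
      case (Suc j)
      have n: "n = Suc (Suc j)" using \<open>n = Suc m\<close> Suc by simp
      have IH1: "J (Suc j) (Suc k) = (if Suc j \<le> Suc k then fact (Suc k) / fact (Suc k - Suc j) * G (Suc k - Suc j) else 0)"
        using less[of "Suc j"] n by simp
      have IH2: "J j k = (if j \<le> k then fact k / fact (k - j) * G (k - j) else 0)"
        using less[of j] n by simp
      have rec: "J n k = 2 * J (Suc j) (Suc k) - 2 * real (Suc j) * J j k" using n J_rec by simp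
      consider "k < j" | "k = j" | "k = Suc j" | "Suc (Suc j) \<le> k" by linarith
      then show ?thesis
      proof cases
        case 1 then show ?thesis using rec IH1 IH2 n by simp
      next
        case 2 then show ?thesis using rec IH1 IH2 n by (simp add: fact_Suc)
      next
        case 3
        have "G 1 = 0" using G_odd[of 0] by simp
        then show ?thesis using rec IH1 IH2 n 3 by (simp add: fact_Suc)
      next
        case 4
        then obtain d where d: "k = Suc (Suc j) + d" using le_Suc_ex by blast
        have g: "G (Suc (Suc d)) = (real d + 1) / 2 * G d" using G_rec[of d] by simp
        have f1: "fact (Suc k) = (real k + 1) * (fact k :: real)" by simp
        have f2: "fact (Suc (Suc d)) = (real d + 1) * (real d + 2) * (fact d :: real)"
          by (simp add: algebra_simps)
        have ar: "\<And>F D g :: real. D \<noteq> 0 \<Longrightarrow>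
           2 * ((real k + 1) * F / ((real d + 1) * (real d + 2) * D) * ((real d + 1) / 2 * g))
           - 2 * real (Suc j) * (F / ((real d + 1) * (real d + 2) * D) * ((real d + 1) / 2 * g)) = F / D * g"
        proof -
          fix F D g :: real assume "D \<noteq> 0"
          moreover have "real d + 1 \<noteq> 0" "real d + 2 \<noteq> 0" by linarith+
          moreover have "real k = real j + 2 + real d" using d by simp
          ultimately have kk: "real k + 1 - real (Suc j) = real d + 2" by simp
          define Z where "Z = F / ((real d + 1) * (real d + 2) * D)"
          have "2 * ((real k + 1) * F / ((real d + 1) * (real d + 2) * D) * ((real d + 1) / 2 * g))
           - 2 * real (Suc j) * (F / ((real d + 1) * (real d + 2) * D) * ((real d + 1) / 2 * g))
           = (real k + 1 - real (Suc j)) * (real d + 1) * Z * g"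
          proof -
            have z1: "(real k + 1) * F / ((real d + 1) * (real d + 2) * D) = (real k + 1) * Z"
              unfolding Z_def by simp
            have z2: "F / ((real d + 1) * (real d + 2) * D) = Z" unfolding Z_def by simp
            show ?thesis unfolding z1 z2 by (simp add: field_simps)
          qed
          also have "\<dots> = ((real d + 1) * (real d + 2)) * Z * g" unfolding kk by (simp add: algebra_simps)
          also have "((real d + 1) * (real d + 2)) * Z = F / D"
          proof -
            have cc: "\<And>c::real. c \<noteq> 0 \<Longrightarrow> c * (F / (c * D)) = F / D"
              using \<open>D \<noteq> 0\<close> by (simp add: field_simps)
            show ?thesis unfolding Z_def
              by (rule cc) (use \<open>real d + 1 \<noteq> 0\<close> \<open>real d + 2 \<noteq> 0\<close> in simp)
          qed
          finally show "2 * ((real k + 1) * F / ((real d + 1) * (real d + 2) * D) * ((real d + 1) / 2 * g))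
           - 2 * real (Suc j) * (F / ((real d + 1) * (real d + 2) * D) * ((real d + 1) / 2 * g)) = F / D * g" .
        qed
        have "J n k = 2 * (fact (Suc k) / fact (Suc (Suc d)) * G (Suc (Suc d)))
             - 2 * real (Suc j) * (fact k / fact (Suc (Suc d)) * G (Suc (Suc d)))"
          using rec IH1 IH2 d by simp
        also have "\<dots> = fact k / fact d * G d"
          unfolding f1 f2 g by (rule ar) simp
        finally show ?thesis using d n by simp
      qed
    qed
  qed
qed

lemma H_Suc: "H (Suc m) x = 2 * x * H m x - 2 * real m * H (m - 1) x"
  by (cases m) simp_all

lemma HH_int: "integrable lborel (\<lambda>x. H n x * H m x * x^k * exp (-(x^2)))"
proof (induction m arbitrary: n k rule: less_induct)
  case (less m)
  show ?case
  proof (cases m)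
    case 0 then show ?thesis using H_int[of n k] by simp
  next
    case (Suc j)
    have i1: "integrable lborel (\<lambda>x. H n x * H j x * x^(Suc k) * exp (-(x^2)))"
      using less[of j n "Suc k"] Suc by simp
    have i2: "integrable lborel (\<lambda>x. H n x * H (j - 1) x * x^k * exp (-(x^2)))"
      using less[of "j - 1" n k] Suc by simp
    have "integrable lborel (\<lambda>x. 2 * (H n x * H j x * x^(Suc k) * exp (-(x^2)))
              - 2 * real j * (H n x * H (j - 1) x * x^k * exp (-(x^2))))"
      using i1 i2 by auto
    then show ?thesis using Suc by (simp only: H_Suc) (simp add: algebra_simps)
  qed
qed

lemma HH_int0: "integrable lborel (\<lambda>x. H n x * H m x * exp (-(x^2)))"
  using HH_int[of n m 0] by simp

definition nu :: "nat \<Rightarrow> real" where "nu n = 2^n * fact n * sqrt pi"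

lemma nu_pos: "nu n > 0" unfolding nu_def by simp

lemma nu_Suc: "nu (Suc n) = 2 * (real n + 1) * nu n"
  unfolding nu_def by (simp add: algebra_simps)

definition Iq :: "nat \<Rightarrow> nat \<Rightarrow> real" where
  "Iq n m = (\<integral>x. H n x * H m x * exp (-(x^2)) \<partial>lborel)"

lemma I_rec: "Iq n (Suc m) = Iq (Suc n) m + 2 * real n * Iq (n - 1) m - 2 * real m * Iq n (m - 1)"
proof -
  have "Iq n (Suc m) = (\<integral>x. H (Suc n) x * H m x * exp (-(x^2)) + 2 * real n * (H (n - 1) x * H m x * exp (-(x^2)))
      - 2 * real m * (H n x * H (m - 1) x * exp (-(x^2))) \<partial>lborel)"
    unfolding Iq_def
  proof (rule Bochner_Integration.integral_cong[OF refl])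
    fix x
    have "H n x * H (Suc m) x = 2 * (x * H n x) * H m x - 2 * real m * H n x * H (m - 1) x"
      by (simp only: H_Suc) (simp add: algebra_simps)
    also have "\<dots> = H (Suc n) x * H m x + 2 * real n * H (n - 1) x * H m x - 2 * real m * H n x * H (m - 1) x"
      by (simp only: H_xrec) (simp add: algebra_simps)
    finally have eq: "H n x * H (Suc m) x = H (Suc n) x * H m x + 2 * real n * H (n - 1) x * H m x - 2 * real m * H n x * H (m - 1) x" .
    show "H n x * H (Suc m) x * exp (-(x^2)) = H (Suc n) x * H m x * exp (-(x^2)) + 2 * real n * (H (n - 1) x * H m x * exp (-(x^2)))
      - 2 * real m * (H n x * H (m - 1) x * exp (-(x^2)))"
      using arg_cong[OF eq, of "\<lambda>y. y * exp (-(x^2))"] by (simp add: algebra_simps)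
  qed
  also have "\<dots> = Iq (Suc n) m + 2 * real n * Iq (n - 1) m - 2 * real m * Iq n (m - 1)"
    unfolding Iq_def using HH_int0[of "Suc n" m] HH_int0[of "n - 1" m] HH_int0[of n "m - 1"] by simp
  finally show ?thesis .
qed

lemma I_formula: "Iq n m = (if n = m then nu n else 0)"
proof (induction m arbitrary: n rule: less_induct)
  case (less m)
  show ?case
  proof (cases m)
    case 0
    have "Iq n 0 = J n 0" unfolding Iq_def J_def by simp
    also have "\<dots> = (if n = 0 then nu 0 else 0)" by (simp add: J_formula G_0 nu_def)
    finally show ?thesis using 0 by simp
  next
    case (Suc j)
    have IH1: "\<And>a. Iq a j = (if a = j then nu a else 0)" using less[of j] Suc by simp
    have IH2: "\<And>a. Iq a (j - 1) = (if a = j - 1 then nu a else 0)" using less[of "j - 1"] Suc by simp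
    have r: "Iq n m = Iq (Suc n) j + 2 * real n * Iq (n - 1) j - 2 * real j * Iq n (j - 1)"
      using I_rec Suc by simp
    consider "n = Suc j" | "Suc n = j" | "n \<noteq> Suc j" "Suc n \<noteq> j" by blast
    then show ?thesis
    proof cases
      case 1
      have "Suc j \<noteq> j - 1" by simp
      then show ?thesis using r IH1 IH2 Suc 1 by (simp add: nu_Suc)
    next
      case 2
      have a: "n - 1 \<noteq> j" "n = j - 1" using 2 by auto
      have "nu j = 2 * real j * nu n" using nu_Suc[of n] 2 by simp
      then show ?thesis using r IH1 IH2 Suc 2 a by simp
    next
      case 3
      have a: "Iq (Suc n) j = 0" using IH1 3 by simp
      have b: "real n * Iq (n - 1) j = 0" using IH1 3 by (cases n) auto
      have c: "real j * Iq n (j - 1) = 0" using IH2 3 by (cases j) auto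
      have "Iq n m = 0" using r a b c by linarith
      then show ?thesis using 3 Suc by simp
    qed
  qed
qed

abbreviation h where "h \<equiv> hermite_fun"

lemma h_measurable[measurable]: "h n \<in> borel_measurable borel"
  unfolding hermite_fun_def[abs_def] by measurable

lemma h_mult: "h n x * h m x = H n x * H m x * exp (-(x^2)) / (sqrt (nu n) * sqrt (nu m))"
proof -
  have "exp (- (x^2) / 2) * exp (- (x^2) / 2) = exp (-(x^2))" by (simp flip: exp_add)
  then show ?thesis unfolding hermite_fun_def nu_def
    by (simp add: field_simps)
qed

lemma hh_int: "integrable lborel (\<lambda>x. h n x * h m x)"
  unfolding h_mult using HH_int0[of n m] by simp

lemma hh_integral: "(\<integral>x. h n x * h m x \<partial>lborel) = (if n = m then 1 else 0)"
proof -
  have "(\<integral>x. h n x * h m x \<partial>lborel) = Iq n m / (sqrt (nu n) * sqrt (nu m))"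
    unfolding h_mult Iq_def by simp
  then show ?thesis using nu_pos[of n] nu_pos[of m] by (simp add: I_formula)
qed

lemma h_sq_int: "integrable lborel (\<lambda>x. (h n x)^2)"
  using hh_int[of n n] by (simp add: power2_eq_square)

lemma h_sq_integral: "(\<integral>x. (h n x)^2 \<partial>lborel) = 1"
  using hh_integral[of n n] by (simp add: power2_eq_square)

lemma h_sq: "(h n x)^2 = (H n x)^2 * exp (-(x^2)) / nu n"
  using h_mult[of n x n] nu_pos[of n] by (simp add: power2_eq_square)

lemma HH_integral: "(\<integral>x. (H n x)^2 * exp (-(x^2)) \<partial>lborel) = nu n"
  using I_formula[of n n] unfolding Iq_def by (simp add: power2_eq_square)

lemma HH_sq_int: "integrable lborel (\<lambda>x. (H n x)^2 * exp (-(x^2)))"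
  using HH_int0[of n n] by (simp add: power2_eq_square)

lemma mom_int: "integrable lborel (\<lambda>x. ((1 + x^2) * h n x)^2)"
proof -
  have "integrable lborel (\<lambda>x. (H n x * H n x * x^0 * exp (-(x^2)) + 2 * (H n x * H n x * x^2 * exp (-(x^2)))
         + H n x * H n x * x^4 * exp (-(x^2))) / nu n)"
    using HH_int[of n n 0] HH_int[of n n 2] HH_int[of n n 4] by auto
  moreover have "((1 + x^2) * h n x)^2 = (H n x * H n x * x^0 * exp (-(x^2)) + 2 * (H n x * H n x * x^2 * exp (-(x^2)))
         + H n x * H n x * x^4 * exp (-(x^2))) / nu n" for x
  proof -
    have e: "((1::real) + x^2)^2 = 1 + 2 * x^2 + x^4"
      by (simp add: power2_eq_square power4_eq_xxxx algebra_simps)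
    have "((1 + x^2) * h n x)^2 = (1 + x^2)^2 * (h n x)^2" by (simp add: power_mult_distrib)
    also have "\<dots> = (1 + 2 * x^2 + x^4) * ((H n x)^2 * exp (-(x^2)) / nu n)"
      unfolding e h_sq ..
    finally have "((1 + x^2) * h n x)^2 = (1 + 2 * x^2 + x^4) * ((H n x)^2 * exp (-(x^2)) / nu n)" .
    then show ?thesis by (simp add: power2_eq_square algebra_simps add_divide_distrib)
  qed
  ultimately show ?thesis by simp
qed

lemma nu_SS: "nu (n + 2) = 4 * (real n + 1) * (real n + 2) * nu n"
  using nu_Suc[of "Suc n"] nu_Suc[of n] by (simp add: algebra_simps)

lemma nu_minus2: "(real n * (real n - 1))^2 * nu (n - 2) \<le> real n * (real n - 1) / 4 * nu n"
proof (cases "n \<ge> 2")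
  case True
  then obtain k where k: "n = k + 2" using le_Suc_ex by (metis add.commute)
  have nn: "nu n = 4 * ((real k + 2) * (real k + 1)) * nu k" using nu_SS[of k] k by (simp add: algebra_simps)
  have rr: "real n * (real n - 1) = (real k + 2) * (real k + 1)" using k by (simp add: algebra_simps)
  have n2: "n - 2 = k" using k by simp
  show ?thesis unfolding nn rr n2 by (simp add: power2_eq_square)
next
  case False then have "n = 0 \<or> n = 1" by auto
  then show ?thesis by auto
qed

lemma mom_bound: "(\<integral>x. ((1 + x^2) * h n x)^2 \<partial>lborel) \<le> 5 * (real n + 2)^2"
proof -
  let ?E = "\<lambda>x. exp (-(x^2))"
  define a where "a = (\<lambda>x. (1/16) * ((H (n+2) x)^2 * ?E x) + (real n + 3/2)^2 * ((H n x)^2 * ?E x)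
        + (real n * (real n - 1))^2 * ((H (n-2) x)^2 * ?E x))"
  have pw: "((1 + x^2) * h n x)^2 \<le> 3 * a x / nu n" for x
  proof -
    have "((1 + x^2) * h n x)^2 = ((1 + x^2) * H n x)^2 * ?E x / nu n"
      by (simp add: power_mult_distrib h_sq)
    also have "\<dots> = (H (n+2) x / 4 + (real n + 3/2) * H n x + real n * (real n - 1) * H (n - 2) x)^2 * ?E x / nu n"
      by (simp only: H_x2)
    also have "\<dots> \<le> 3 * a x / nu n"
    proof -
      have t: "(u + v + w)^2 \<le> 3 * (u^2 + v^2 + w^2)" for u v w :: real
      proof -
        have "3 * (u^2 + v^2 + w^2) - (u + v + w)^2 = (u - v)^2 + (v - w)^2 + (u - w)^2"
          by (simp add: power2_eq_square algebra_simps)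
        moreover have "(u - v)^2 + (v - w)^2 + (u - w)^2 \<ge> 0" by simp
        ultimately show ?thesis by linarith
      qed
      have "(H (n+2) x / 4 + (real n + 3/2) * H n x + real n * (real n - 1) * H (n - 2) x)^2 * ?E x
          \<le> 3 * ((H (n+2) x / 4)^2 + ((real n + 3/2) * H n x)^2 + (real n * (real n - 1) * H (n - 2) x)^2) * ?E x"
        by (rule mult_right_mono[OF t]) simp
      also have "\<dots> = 3 * a x" by (simp only: a_def power_mult_distrib power_divide) (simp add: algebra_simps)
      finally show ?thesis using nu_pos[of n] by (simp add: divide_right_mono)
    qed
    finally show ?thesis .
  qed
  have ai: "integrable lborel a" unfolding a_def
    by (intro Bochner_Integration.integrable_add integrable_mult_right HH_sq_int)
  have "(\<integral>x. ((1 + x^2) * h n x)^2 \<partial>lborel) \<le> (\<integral>x. 3 * a x / nu n \<partial>lborel)"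
    by (rule integral_mono[OF mom_int]) (use ai pw in auto)
  also have "\<dots> = 3 * (\<integral>x. a x \<partial>lborel) / nu n" by simp
  also have "(\<integral>x. a x \<partial>lborel) = (1/16) * nu (n+2) + (real n + 3/2)^2 * nu n + (real n * (real n - 1))^2 * nu (n-2)"
    unfolding a_def using HH_sq_int by (simp add: HH_integral del: hermite_poly.simps)
  also have "3 * ((1/16) * nu (n+2) + (real n + 3/2)^2 * nu n + (real n * (real n - 1))^2 * nu (n-2)) / nu n
     \<le> 3 * ((1/16) * nu (n+2) + (real n + 3/2)^2 * nu n + real n * (real n - 1) / 4 * nu n) / nu n"
    using nu_minus2[of n] nu_pos[of n] by (intro divide_right_mono mult_left_mono) auto
  also have "\<dots> = 3 * ((real n + 1) * (real n + 2) / 4 + (real n + 3/2)^2 + real n * (real n - 1) / 4)"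
    using nu_pos[of n] unfolding nu_SS by (simp add: field_simps)
  also have "\<dots> \<le> 5 * (real n + 2)^2"
  proof -
    have "5 * (real n + 2)^2 - 3 * ((real n + 1) * (real n + 2) / 4 + (real n + 3/2)^2 + real n * (real n - 1) / 4)
       = (real n)^2 / 2 + 19/2 * real n + 47/4"
      by (simp add: power2_eq_square field_simps)
    moreover have "0 \<le> (real n)^2 / 2 + 19/2 * real n + 47/4" by simp
    ultimately show ?thesis by linarith
  qed
  finally show ?thesis .
qed

lemma holder_aux:
  fixes u w :: "'a \<Rightarrow> real"
  assumes [measurable]: "u \<in> borel_measurable M" "w \<in> borel_measurable M"
    and u0: "\<And>x. 0 \<le> u x" and w0: "\<And>x. 0 \<le> w x"
    and P: "P > 1" and Q: "Q > 1" and PQ: "1/P + 1/Q = 1"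
    and iu: "integrable M (\<lambda>x. u x powr P)" and iw: "integrable M (\<lambda>x. w x powr Q)"
  shows "integrable M (\<lambda>x. u x * w x) \<and>
         (\<integral>x. u x * w x \<partial>M) \<le> (\<integral>x. u x powr P \<partial>M) powr (1/P) * (\<integral>x. w x powr Q \<partial>M) powr (1/Q)"
proof -
  define A where "A = (\<integral>x. u x powr P \<partial>M)"
  define B where "B = (\<integral>x. w x powr Q \<partial>M)"
  have A0: "A \<ge> 0" unfolding A_def by (intro integral_nonneg_AE) auto
  have B0: "B \<ge> 0" unfolding B_def by (intro integral_nonneg_AE) auto
  show ?thesis
  proof (cases "A = 0 \<or> B = 0")
    case True
    then have "AE x in M. u x * w x = 0"
    proof
      assume "A = 0"
      then have "AE x in M. u x powr P = 0" using iu unfolding A_def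
        by (subst (asm) integral_nonneg_eq_0_iff_AE) auto
      then show ?thesis by eventually_elim (use P in auto)
    next
      assume "B = 0"
      then have "AE x in M. w x powr Q = 0" using iw unfolding B_def
        by (subst (asm) integral_nonneg_eq_0_iff_AE) auto
      then show ?thesis by eventually_elim (use Q in auto)
    qed
    have int: "integrable M (\<lambda>x. u x * w x)"
    proof (rule integrable_cong_AE_imp[where g="\<lambda>x. 0"])
      show "AE x in M. 0 = u x * w x" using \<open>AE x in M. u x * w x = 0\<close> by eventually_elim simp
    qed auto
    have "(\<integral>x. u x * w x \<partial>M) = (\<integral>x. 0 \<partial>M)"
      using \<open>AE x in M. u x * w x = 0\<close> by (intro integral_cong_AE) auto
    then show ?thesis using int A0 B0 unfolding A_def[symmetric] B_def[symmetric] by simp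
  next
    case False
    then have Ap: "A > 0" and Bp: "B > 0" using A0 B0 by auto
    define a where "a = A powr (1/P)"
    define b where "b = B powr (1/Q)"
    have ap: "a > 0" and bp: "b > 0" unfolding a_def b_def using Ap Bp by auto
    have apP: "a powr P = A" unfolding a_def using Ap P by (simp add: powr_powr)
    have bpQ: "b powr Q = B" unfolding b_def using Bp Q by (simp add: powr_powr)
    have pw: "u x * w x \<le> a * b * (u x powr P / (P * A) + w x powr Q / (Q * B))" for x
    proof -
      have "(u x / a) * (w x / b) \<le> (u x / a) powr P / P + (w x / b) powr Q / Q"
        by (rule Youngs_inequality) (use P Q PQ u0 w0 ap bp in auto)
      also have "\<dots> = u x powr P / (P * A) + w x powr Q / (Q * B)"
        using ap bp u0 w0 by (simp add: powr_divide apP bpQ mult.commute)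
      finally show ?thesis using ap bp by (simp add: field_simps)
    qed
    have ib: "integrable M (\<lambda>x. a * b * (u x powr P / (P * A) + w x powr Q / (Q * B)))"
      using iu iw by auto
    have int: "integrable M (\<lambda>x. u x * w x)"
    proof (rule Bochner_Integration.integrable_bound[OF ib])
      show "AE x in M. norm (u x * w x) \<le> norm (a * b * (u x powr P / (P * A) + w x powr Q / (Q * B)))"
      proof (intro AE_I2)
        fix x
        have "0 \<le> u x * w x" using u0 w0 by simp
        then show "norm (u x * w x) \<le> norm (a * b * (u x powr P / (P * A) + w x powr Q / (Q * B)))"
          using pw[of x] by simp
      qed
    qed simp
    have "(\<integral>x. u x * w x \<partial>M) \<le> (\<integral>x. a * b * (u x powr P / (P * A) + w x powr Q / (Q * B)) \<partial>M)"
      by (rule integral_mono[OF int ib]) (use pw in auto)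
    also have "\<dots> = a * b * (A / (P * A) + B / (Q * B))"
      using iu iw unfolding A_def B_def by simp
    also have "\<dots> = a * b" using Ap Bp PQ by simp
    finally show ?thesis using int unfolding a_def b_def A_def B_def by simp
  qed
qed

lemma powr2_nn: "0 \<le> (x::real) \<Longrightarrow> x powr 2 = x^2"
  by (cases "x = 0") (simp_all add: powr_realpow[of x 2, simplified])

lemma esssup_nonneg_lborel:
  fixes g :: "real \<Rightarrow> real"
  assumes [measurable]: "g \<in> borel_measurable borel" and "\<And>x. 0 \<le> g x"
  shows "0 \<le> esssup lborel (\<lambda>x. ereal (g x))"
proof -
  have "esssup lborel (\<lambda>x::real. ereal 0) \<le> esssup lborel (\<lambda>x. ereal (g x))"
    using esssup_mono[of "\<lambda>x::real. ereal 0" "lborel::real measure" "\<lambda>x. ereal (g x)"] assms by simp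
  moreover have "esssup lborel (\<lambda>x::real. ereal 0) = 0" by (subst esssup_const) auto
  ultimately show ?thesis by simp
qed

lemma memLp_meas: "memLp p f \<Longrightarrow> f \<in> borel_measurable borel"
  unfolding memLp_def by simp

lemma Linf_bound:
  assumes "memLp \<infinity> f"
  shows "AE x in lborel. cmod (f x) \<le> Lp_norm \<infinity> f" and "0 \<le> Lp_norm \<infinity> f"
proof -
  have [measurable]: "f \<in> borel_measurable borel" using assms memLp_meas by blast
  define M where "M = esssup lborel (\<lambda>x. ereal (cmod (f x)))"
  have Mfin: "M < \<infinity>" using assms unfolding memLp_def M_def by simp
  have M0: "0 \<le> M" unfolding M_def by (rule esssup_nonneg_lborel) auto
  have eq: "ereal (real_of_ereal M) = M" using Mfin M0 by (cases M) auto
  have N: "Lp_norm \<infinity> f = real_of_ereal M" unfolding Lp_norm_def M_def by simp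
  have "AE x in lborel. ereal (cmod (f x)) \<le> M" unfolding M_def by (rule esssup_AE)
  then show "AE x in lborel. cmod (f x) \<le> Lp_norm \<infinity> f"
    unfolding N by eventually_elim (metis eq ereal_less_eq(3))
  show "0 \<le> Lp_norm \<infinity> f" unfolding N using M0 by (simp add: real_of_ereal_pos)
qed

lemma HL:
  fixes f :: "real \<Rightarrow> complex" and p :: ereal and v :: "real \<Rightarrow> real"
  assumes p: "2 \<le> p" and f: "memLp p f" and [measurable]: "v \<in> borel_measurable borel"
    and v0: "\<And>x. 0 \<le> v x" and vS: "\<And>x. v x \<le> S" and iv: "integrable lborel v"
    and vI: "(\<integral>x. v x \<partial>lborel) \<le> I" and S: "S > 0" and I: "I > 0"
  shows "integrable lborel (\<lambda>x. (cmod (f x))^2 * v x) \<and>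
    (\<integral>x. (cmod (f x))^2 * v x \<partial>lborel) \<le> (Lp_norm p f)^2 * I powr (1 - 2 * inv_exp p) * S powr (2 * inv_exp p)"
proof -
  have [measurable]: "f \<in> borel_measurable borel" using f memLp_meas by blast
  show ?thesis
  proof (cases "p = \<infinity>")
    case True
    define N where "N = Lp_norm p f"
    have AEN: "AE x in lborel. cmod (f x) \<le> N" and N0: "0 \<le> N"
      using Linf_bound f True unfolding N_def by auto
    have AEb: "AE x in lborel. (cmod (f x))^2 * v x \<le> N^2 * v x"
      using AEN by eventually_elim (use v0 in \<open>auto intro!: mult_right_mono power_mono\<close>)
    have int: "integrable lborel (\<lambda>x. (cmod (f x))^2 * v x)"
    proof (rule Bochner_Integration.integrable_bound[where f="\<lambda>x. N^2 * v x"])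
      show "AE x in lborel. norm ((cmod (f x))^2 * v x) \<le> norm (N^2 * v x)"
        using AEb by eventually_elim (use v0 in auto)
    qed (use iv in auto)
    have "(\<integral>x. (cmod (f x))^2 * v x \<partial>lborel) \<le> (\<integral>x. N^2 * v x \<partial>lborel)"
      by (rule integral_mono_AE[OF int _ AEb]) (use iv in auto)
    also have "\<dots> = N^2 * (\<integral>x. v x \<partial>lborel)" by simp
    also have "\<dots> \<le> N^2 * I" using vI by (intro mult_left_mono) auto
    finally show ?thesis using int True I S unfolding N_def inv_exp_def by simp
  next
    case False
    then obtain P' where pP: "p = ereal P'" using p by (cases p) auto
    have P2: "P' \<ge> 2" using p pP by simp
    have rp: "real_of_ereal p = P'" using pP by simp
    have fint: "integrable lborel (\<lambda>x. cmod (f x) powr P')"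
      using f False unfolding memLp_def rp by simp
    define A where "A = (\<integral>x. cmod (f x) powr P' \<partial>lborel)"
    have A0: "A \<ge> 0" unfolding A_def by (intro integral_nonneg_AE) auto
    have N: "Lp_norm p f = A powr (1 / P')" unfolding Lp_norm_def A_def using False rp by simp
    have q: "inv_exp p = 1 / P'" unfolding inv_exp_def using False rp by simp
    have N2: "(Lp_norm p f)^2 = A powr (2 / P')"
    proof -
      have "(A powr (1 / P'))^2 = A powr (1 / P' + 1 / P')" by (simp only: power2_eq_square powr_add)
      also have "A powr (1 / P' + 1 / P') = A powr (2 / P')"
      proof -
        have "1 / P' + 1 / P' = 2 / P'" by simp
        then show ?thesis by (rule arg_cong)
      qed
      finally show ?thesis unfolding N .
    qed
    show ?thesis
    proof (cases "P' = 2")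
      case True
      have sq: "(cmod (f x))^2 = cmod (f x) powr P'" for x using True by (simp add: powr2_nn)
      have int: "integrable lborel (\<lambda>x. (cmod (f x))^2 * v x)"
      proof (rule Bochner_Integration.integrable_bound[where f="\<lambda>x. S * cmod (f x) powr P'"])
        show "AE x in lborel. norm ((cmod (f x))^2 * v x) \<le> norm (S * cmod (f x) powr P')"
        proof (intro AE_I2)
          fix x
          have "(cmod (f x))^2 * v x \<le> (cmod (f x))^2 * S" by (intro mult_left_mono vS) simp
          then show "norm ((cmod (f x))^2 * v x) \<le> norm (S * cmod (f x) powr P')"
            using v0[of x] S by (simp add: sq mult.commute)
        qed
      qed (use fint in auto)
      have "(\<integral>x. (cmod (f x))^2 * v x \<partial>lborel) \<le> (\<integral>x. S * cmod (f x) powr P' \<partial>lborel)"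
      proof (rule integral_mono[OF int])
        show "integrable lborel (\<lambda>x. S * cmod (f x) powr P')" using fint by auto
        fix x
        have "(cmod (f x))^2 * v x \<le> (cmod (f x))^2 * S" by (intro mult_left_mono vS) simp
        then show "(cmod (f x))^2 * v x \<le> S * cmod (f x) powr P'" by (simp add: sq mult.commute)
      qed
      also have "\<dots> = S * A" unfolding A_def by simp
      finally show ?thesis using int True I S A0 unfolding N2 q by (simp add: mult.commute)
    next
      case False
      then have P2': "P' > 2" using P2 by simp
      define P where "P = P' / 2"
      define Q where "Q = P' / (P' - 2)"
      have P1: "P > 1" unfolding P_def using P2' by simp
      have Q1: "Q > 1" unfolding Q_def using P2' by simp
      have PQ: "1/P + 1/Q = 1" unfolding P_def Q_def using P2' by (simp add: field_simps)
      have uP: "((cmod (f x))^2) powr P = cmod (f x) powr P'" for x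
      proof -
        have "((cmod (f x))^2) powr P = (cmod (f x) powr 2) powr P" by (simp add: powr2_nn)
        also have "\<dots> = cmod (f x) powr P'" unfolding powr_powr P_def by simp
        finally show ?thesis .
      qed
      have vQ: "v x powr Q \<le> S powr (Q - 1) * v x" for x
      proof (cases "v x = 0")
        case False
        then have vp: "v x > 0" using v0[of x] by simp
        have "v x powr Q = v x powr (Q - 1) * v x" using vp by (simp add: powr_diff)
        also have "\<dots> \<le> S powr (Q - 1) * v x"
          using vp vS[of x] Q1 by (intro mult_right_mono powr_mono2) auto
        finally show ?thesis .
      qed (use Q1 in simp)
      have ivQ: "integrable lborel (\<lambda>x. v x powr Q)"
      proof (rule Bochner_Integration.integrable_bound[where f="\<lambda>x. S powr (Q - 1) * v x"])
        show "AE x in lborel. norm (v x powr Q) \<le> norm (S powr (Q - 1) * v x)"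
          using vQ v0 by (intro AE_I2) (simp add: abs_mult)
      qed (use iv in auto)
      have H: "integrable lborel (\<lambda>x. (cmod (f x))^2 * v x) \<and>
         (\<integral>x. (cmod (f x))^2 * v x \<partial>lborel) \<le> (\<integral>x. ((cmod (f x))^2) powr P \<partial>lborel) powr (1/P) * (\<integral>x. v x powr Q \<partial>lborel) powr (1/Q)"
        by (rule holder_aux) (use P1 Q1 PQ v0 fint ivQ in \<open>auto simp: uP\<close>)
      define B where "B = (\<integral>x. v x powr Q \<partial>lborel)"
      have B0: "0 \<le> B" unfolding B_def by (intro integral_nonneg_AE) auto
      have "B \<le> (\<integral>x. S powr (Q - 1) * v x \<partial>lborel)" unfolding B_def
        by (rule integral_mono[OF ivQ]) (use iv vQ in auto)
      also have "\<dots> \<le> S powr (Q - 1) * I" using vI by (simp add: mult_left_mono)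
      finally have BI: "B \<le> S powr (Q - 1) * I" .
      have "B powr (1/Q) \<le> (S powr (Q - 1) * I) powr (1/Q)"
        using BI B0 Q1 by (intro powr_mono2) auto
      also have "\<dots> = S powr ((Q - 1) / Q) * I powr (1/Q)"
        using S I by (simp add: powr_mult powr_powr)
      also have "S powr ((Q - 1) / Q) * I powr (1/Q) = S powr (2 / P') * I powr (1 - 2 * (1 / P'))"
      proof -
        have e1: "(Q - 1) / Q = 2 / P'" unfolding Q_def using P2' by (simp add: field_simps)
        have e2: "1 / Q = 1 - 2 * (1 / P')" unfolding Q_def using P2' by (simp add: field_simps)
        show ?thesis by (simp only: e1 e2)
      qed
      finally have Bb: "B powr (1/Q) \<le> S powr (2 / P') * I powr (1 - 2 * (1 / P'))" .
      have "(\<integral>x. (cmod (f x))^2 * v x \<partial>lborel) \<le> A powr (1/P) * B powr (1/Q)"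
        using H unfolding A_def B_def uP by simp
      also have "A powr (1/P) = A powr (2 / P')" unfolding P_def by simp
      also have "A powr (2 / P') * B powr (1 / Q) \<le> A powr (2 / P') * (S powr (2 / P') * I powr (1 - 2 * (1 / P')))"
        using Bb by (intro mult_left_mono) auto
      finally show ?thesis using H unfolding N2 q by (simp add: mult_ac)
    qed
  qed
qed

lemma tail_pos:
  assumes R: "R > 0"
  shows "integrable lborel (\<lambda>x::real. indicator {R..} x / x^4) \<and> (\<integral>x. indicator {R..} x / x^4 \<partial>lborel) = 1 / (3 * R^3)"
proof -
  have hi: "((\<lambda>x::real. 1 / x ^ 4) has_integral 1 / (real (4 - 1) * R ^ (4 - 1))) {R..}"
    by (rule has_integral_inverse_power_to_inf) (use R in auto)
  have nn: "integral\<^sup>N lborel (\<lambda>x. ennreal (1 / x^4) * indicator {R..} x) = ennreal (1 / (3 * R^3))"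
    using nn_integral_has_integral_lebesgue'[OF _ hi] by simp
  have eq: "(\<lambda>x. ennreal (1 / x^4) * indicator {R..} x) = (\<lambda>x. ennreal (indicator {R..} x / x^4))"
    by (auto simp: fun_eq_iff split: split_indicator)
  have "integrable lborel (\<lambda>x::real. indicator {R..} x / x^4) \<and> (\<integral>x. indicator {R..} x / x^4 \<partial>lborel) = 1 / (3 * R^3)"
    by (rule nn_integral_eq_integrable[THEN iffD1]) (use nn eq R in \<open>auto split: split_indicator\<close>)
  then show ?thesis .
qed

definition w3 :: "real \<Rightarrow> real \<Rightarrow> real" where
  "w3 R x = (if R < \<bar>x\<bar> then 1 / (1 + x^2)^2 else 0)"

lemma w3_meas[measurable]: "w3 R \<in> borel_measurable borel"
  unfolding w3_def[abs_def] by measurable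

lemma w3_nonneg: "0 \<le> w3 R x" unfolding w3_def by simp

lemma w3_le: assumes "R > 0" shows "w3 R x \<le> 1 / R^4"
proof (cases "R < \<bar>x\<bar>")
  case True
  have "R^4 \<le> \<bar>x\<bar>^4" using True assms by (intro power_mono) auto
  also have "\<bar>x\<bar>^4 = (x^2)^2" by (simp add: power_even_abs_numeral flip: power_mult)
  also have "(x^2)^2 \<le> (1 + x^2)^2" by (intro power_mono) auto
  finally have "R^4 \<le> (1 + x^2)^2" .
  then show ?thesis using True assms unfolding w3_def by (simp add: frac_le)
qed (simp add: w3_def)

lemma w3_tail: assumes "R > 0"
  shows "w3 R x \<le> indicator {R..} x / x^4 + indicator {R..} (-x) / (-x)^4"
proof (cases "R < \<bar>x\<bar>")
  case True
  have xp: "x^4 > 0" using True assms by auto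
  have "x^4 \<le> (1 + x^2)^2"
  proof -
    have "x^4 = (x^2)^2" by (simp flip: power_mult)
    also have "\<dots> \<le> (1 + x^2)^2" by (intro power_mono) auto
    finally show ?thesis .
  qed
  then have a: "1 / (1 + x^2)^2 \<le> 1 / x^4" using xp by (simp add: frac_le)
  show ?thesis
  proof (cases "x > 0")
    case True
    then show ?thesis using a \<open>R < \<bar>x\<bar>\<close> assms unfolding w3_def by (auto split: split_indicator)
  next
    case False
    then show ?thesis using a \<open>R < \<bar>x\<bar>\<close> assms unfolding w3_def by (auto split: split_indicator)
  qed
qed (use assms in \<open>auto simp: w3_def split: split_indicator\<close>)

lemma w3_int: assumes "R > 0"
  shows "integrable lborel (w3 R) \<and> (\<integral>x. w3 R x \<partial>lborel) \<le> 2 / (3 * R^3)"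
proof -
  define g where "g = (\<lambda>x::real. indicator {R..} x / x^4)"
  have gi: "integrable lborel g" and gI: "(\<integral>x. g x \<partial>lborel) = 1 / (3 * R^3)"
    using tail_pos[OF assms] unfolding g_def by auto
  have gi': "integrable lborel (\<lambda>x. g (0 + (-1) * x))"
    by (rule lborel_integrable_real_affine[OF gi]) simp
  have gI': "(\<integral>x. g (0 + (-1) * x) \<partial>lborel) = 1 / (3 * R^3)"
    using lborel_integral_real_affine[of "-1" g 0] gI by simp
  have bi: "integrable lborel (\<lambda>x. g x + g (0 + (-1) * x))" using gi gi' by auto
  have pw: "w3 R x \<le> g x + g (0 + (-1) * x)" for x
    using w3_tail[OF assms, of x] unfolding g_def by simp
  have int: "integrable lborel (w3 R)"
  proof (rule Bochner_Integration.integrable_bound[OF bi])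
    show "AE x in lborel. norm (w3 R x) \<le> norm (g x + g (0 + (-1) * x))"
    proof (intro AE_I2)
      fix x
      have "0 \<le> w3 R x" by (rule w3_nonneg)
      then show "norm (w3 R x) \<le> norm (g x + g (0 + (-1) * x))" using pw[of x] by simp
    qed
  qed simp
  have "(\<integral>x. w3 R x \<partial>lborel) \<le> (\<integral>x. g x + g (0 + (-1) * x) \<partial>lborel)"
    by (rule integral_mono[OF int bi]) (use pw in auto)
  also have "\<dots> = 2 / (3 * R^3)" using gi gi' gI gI' by simp
  finally show ?thesis using int by simp
qed

definition w2 :: "real \<Rightarrow> real" where "w2 x = 1 / (1 + x^2)^2"

lemma w2_meas[measurable]: "w2 \<in> borel_measurable borel"
  unfolding w2_def[abs_def] by measurable

lemma w2_nonneg: "0 \<le> w2 x" unfolding w2_def by simp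
lemma w2_le1: "w2 x \<le> 1"
proof -
  have "1 \<le> (1 + x^2)^2" by (simp add: one_le_power)
  then show ?thesis unfolding w2_def by (simp add: divide_le_eq)
qed

lemma w2_int: "integrable lborel w2 \<and> (\<integral>x. w2 x \<partial>lborel) \<le> 3"
proof -
  define k where "k = (\<lambda>x::real. indicator {-1..1} x :: real)"
  have ki: "integrable lborel k" and kI: "(\<integral>x. k x \<partial>lborel) = 2"
    unfolding k_def by (auto simp: integrable_indicator_iff)
  have wi: "integrable lborel (w3 1)" and wI: "(\<integral>x. w3 1 x \<partial>lborel) \<le> 2/3"
    using w3_int[of 1] by auto
  have pw: "w2 x \<le> k x + w3 1 x" for x
    using w2_le1[of x] unfolding w2_def w3_def k_def by (auto split: split_indicator)
  have bi: "integrable lborel (\<lambda>x. k x + w3 1 x)" using ki wi by auto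
  have int: "integrable lborel w2"
  proof (rule Bochner_Integration.integrable_bound[OF bi])
    show "AE x in lborel. norm (w2 x) \<le> norm (k x + w3 1 x)"
    proof (intro AE_I2)
      fix x
      have "0 \<le> w2 x" by (rule w2_nonneg)
      then show "norm (w2 x) \<le> norm (k x + w3 1 x)" using pw[of x] by simp
    qed
  qed simp
  have "(\<integral>x. w2 x \<partial>lborel) \<le> (\<integral>x. k x + w3 1 x \<partial>lborel)"
    by (rule integral_mono[OF int bi]) (use pw in auto)
  also have "\<dots> \<le> 3" using ki wi kI wI by simp
  finally show ?thesis using int by simp
qed

lemma ind_int: assumes "R > 0"
  shows "integrable lborel (\<lambda>x::real. indicator {-R..R} x :: real) \<and> (\<integral>x. indicator {-R..R} x \<partial>lborel) = 2 * R"
  using assms by (auto simp: integrable_indicator_iff)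

lemma CS:
  fixes u w :: "real \<Rightarrow> real"
  assumes [measurable]: "u \<in> borel_measurable borel" "w \<in> borel_measurable borel"
    and u0: "\<And>x. 0 \<le> u x" and w0: "\<And>x. 0 \<le> w x"
    and iu: "integrable lborel (\<lambda>x. (u x)^2)" and iw: "integrable lborel (\<lambda>x. (w x)^2)"
  shows "integrable lborel (\<lambda>x. u x * w x) \<and>
         (\<integral>x. u x * w x \<partial>lborel) \<le> sqrt (\<integral>x. (u x)^2 \<partial>lborel) * sqrt (\<integral>x. (w x)^2 \<partial>lborel)"
proof -
  have e1: "(\<lambda>x. u x powr 2) = (\<lambda>x. (u x)^2)" using u0 by (simp add: powr2_nn)
  have e2: "(\<lambda>x. w x powr 2) = (\<lambda>x. (w x)^2)" using w0 by (simp add: powr2_nn)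
  have A0: "0 \<le> (\<integral>x. (u x)^2 \<partial>lborel)" by (intro integral_nonneg_AE) auto
  have B0: "0 \<le> (\<integral>x. (w x)^2 \<partial>lborel)" by (intro integral_nonneg_AE) auto
  have "integrable lborel (\<lambda>x. u x * w x) \<and>
         (\<integral>x. u x * w x \<partial>lborel) \<le> (\<integral>x. u x powr 2 \<partial>lborel) powr (1/2) * (\<integral>x. w x powr 2 \<partial>lborel) powr (1/2)"
    by (rule holder_aux) (use u0 w0 iu iw e1 e2 in auto)
  then show ?thesis unfolding e1 e2 using A0 B0 by (simp add: powr_half_sqrt)
qed

lemma ON_real:
  fixes r :: "nat \<Rightarrow> real"
  shows "integrable lborel (\<lambda>x. (\<Sum>n<M. r n * h n x)^2) \<and>
         (\<integral>x. (\<Sum>n<M. r n * h n x)^2 \<partial>lborel) = (\<Sum>n<M. (r n)^2)"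
proof -
  have eq: "(\<Sum>n<M. r n * h n x)^2 = (\<Sum>n<M. \<Sum>m<M. r n * r m * (h n x * h m x))" for x
    by (simp add: power2_eq_square sum_product algebra_simps)
  have int: "integrable lborel (\<lambda>x. \<Sum>n<M. \<Sum>m<M. r n * r m * (h n x * h m x))"
    using hh_int by auto
  have "(\<integral>x. (\<Sum>n<M. \<Sum>m<M. r n * r m * (h n x * h m x)) \<partial>lborel)
      = (\<Sum>n<M. \<Sum>m<M. r n * r m * (\<integral>x. h n x * h m x \<partial>lborel))"
    using hh_int by (simp add: integral_sum)
  also have "\<dots> = (\<Sum>n<M. (r n)^2)"
    by (simp add: hh_integral power2_eq_square if_distrib sum.delta cong: if_cong)
  finally show ?thesis using int unfolding eq by simp
qed

lemma uh_int:
  fixes u :: "real \<Rightarrow> real"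
  assumes [measurable]: "u \<in> borel_measurable borel" and iu: "integrable lborel (\<lambda>x. (u x)^2)"
  shows "integrable lborel (\<lambda>x. u x * h n x)"
proof (rule Bochner_Integration.integrable_bound[where f="\<lambda>x. (u x)^2 + (h n x)^2"])
  show "integrable lborel (\<lambda>x. (u x)^2 + (h n x)^2)" using iu h_sq_int by auto
  show "AE x in lborel. norm (u x * h n x) \<le> norm ((u x)^2 + (h n x)^2)"
  proof (intro AE_I2)
    fix x
    have "\<bar>u x * h n x\<bar> \<le> (u x)^2 + (h n x)^2"
    proof -
      have "0 \<le> (\<bar>u x\<bar> - \<bar>h n x\<bar>)^2" by simp
      also have "\<dots> = (u x)^2 + (h n x)^2 - 2 * \<bar>u x * h n x\<bar>"
        by (simp add: power2_eq_square algebra_simps abs_mult)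
      finally show ?thesis by simp
    qed
    then show "norm (u x * h n x) \<le> norm ((u x)^2 + (h n x)^2)" by simp
  qed
qed simp

lemma bessel_real:
  fixes u :: "real \<Rightarrow> real"
  assumes [measurable]: "u \<in> borel_measurable borel" and iu: "integrable lborel (\<lambda>x. (u x)^2)"
  shows "(\<Sum>n<M. (\<integral>x. u x * h n x \<partial>lborel)^2) \<le> (\<integral>x. (u x)^2 \<partial>lborel)"
proof -
  define d where "d n = (\<integral>x. u x * h n x \<partial>lborel)" for n
  define T where "T x = (\<Sum>n<M. d n * h n x)" for x
  have Ti: "integrable lborel (\<lambda>x. (T x)^2)" and TI: "(\<integral>x. (T x)^2 \<partial>lborel) = (\<Sum>n<M. (d n)^2)"
    using ON_real[of d M] unfolding T_def by auto
  have eT: "(\<lambda>x. u x * T x) = (\<lambda>x. \<Sum>n<M. d n * (u x * h n x))"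
    unfolding T_def by (simp add: sum_distrib_left mult.left_commute)
  have uTi: "integrable lborel (\<lambda>x. u x * T x)"
    unfolding eT using uh_int[OF assms] by auto
  have uTI: "(\<integral>x. u x * T x \<partial>lborel) = (\<Sum>n<M. (d n)^2)"
  proof -
    have "(\<integral>x. u x * T x \<partial>lborel) = (\<integral>x. (\<Sum>n<M. d n * (u x * h n x)) \<partial>lborel)"
      unfolding T_def by (simp add: sum_distrib_left algebra_simps)
    also have "\<dots> = (\<Sum>n<M. d n * d n)"
      using uh_int[OF assms] by (simp add: integral_sum d_def)
    finally show ?thesis by (simp add: power2_eq_square)
  qed
  have "0 \<le> (\<integral>x. (u x - T x)^2 \<partial>lborel)" by (intro integral_nonneg_AE) auto
  also have "(\<integral>x. (u x - T x)^2 \<partial>lborel) = (\<integral>x. (u x)^2 - 2 * (u x * T x) + (T x)^2 \<partial>lborel)"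
    by (simp add: power2_eq_square algebra_simps)
  also have "\<dots> = (\<integral>x. (u x)^2 \<partial>lborel) - 2 * (\<Sum>n<M. (d n)^2) + (\<Sum>n<M. (d n)^2)"
    using iu uTi Ti uTI TI by simp
  finally show ?thesis unfolding d_def by simp
qed

lemma Re_sum_h: "Re (\<Sum>n<M. b n * complex_of_real (h n x)) = (\<Sum>n<M. Re (b n) * h n x)"
  by (simp add: Re_sum)
lemma Im_sum_h: "Im (\<Sum>n<M. b n * complex_of_real (h n x)) = (\<Sum>n<M. Im (b n) * h n x)"
  by (simp add: Im_sum)

lemma ON_complex:
  fixes b :: "nat \<Rightarrow> complex"
  shows "integrable lborel (\<lambda>x. (cmod (\<Sum>n<M. b n * complex_of_real (h n x)))^2) \<and>
         (\<integral>x. (cmod (\<Sum>n<M. b n * complex_of_real (h n x)))^2 \<partial>lborel) = (\<Sum>n<M. (cmod (b n))^2)"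
proof -
  have eq: "(cmod (\<Sum>n<M. b n * complex_of_real (h n x)))^2
      = (\<Sum>n<M. Re (b n) * h n x)^2 + (\<Sum>n<M. Im (b n) * h n x)^2" for x
    by (simp add: cmod_power2 Re_sum_h Im_sum_h)
  have r: "integrable lborel (\<lambda>x. (\<Sum>n<M. Re (b n) * h n x)^2) \<and>
         (\<integral>x. (\<Sum>n<M. Re (b n) * h n x)^2 \<partial>lborel) = (\<Sum>n<M. (Re (b n))^2)"
    by (rule ON_real)
  have i: "integrable lborel (\<lambda>x. (\<Sum>n<M. Im (b n) * h n x)^2) \<and>
         (\<integral>x. (\<Sum>n<M. Im (b n) * h n x)^2 \<partial>lborel) = (\<Sum>n<M. (Im (b n))^2)"
    by (rule ON_real)
  show ?thesis unfolding eq using r i by (simp add: cmod_power2 sum.distrib)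
qed

lemma gh_int:
  fixes g :: "real \<Rightarrow> complex"
  assumes [measurable]: "g \<in> borel_measurable borel" and ig: "integrable lborel (\<lambda>x. (cmod (g x))^2)"
  shows "integrable lborel (\<lambda>x. g x * complex_of_real (h n x))"
proof -
  have "integrable lborel (\<lambda>x. cmod (g x) * h n x)"
    by (rule uh_int) (use ig in auto)
  then have "integrable lborel (\<lambda>x. norm (cmod (g x) * h n x))" by auto
  then show ?thesis
    by (rule Bochner_Integration.integrable_bound) (auto simp: norm_mult)
qed

lemma bessel_complex:
  fixes g :: "real \<Rightarrow> complex"
  assumes [measurable]: "g \<in> borel_measurable borel" and ig: "integrable lborel (\<lambda>x. (cmod (g x))^2)"
  shows "(\<Sum>n<M. (cmod (\<integral>x. g x * complex_of_real (h n x) \<partial>lborel))^2) \<le> (\<integral>x. (cmod (g x))^2 \<partial>lborel)"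
proof -
  have re: "(Re z)^2 \<le> (cmod z)^2" for z
    using power_mono[OF abs_Re_le_cmod[of z], of 2] by simp
  have im: "(Im z)^2 \<le> (cmod z)^2" for z
    using power_mono[OF abs_Im_le_cmod[of z], of 2] by simp
  have iRe: "integrable lborel (\<lambda>x. (Re (g x))^2)"
    by (rule Bochner_Integration.integrable_bound[OF ig]) (use re in auto)
  have iIm: "integrable lborel (\<lambda>x. (Im (g x))^2)"
    by (rule Bochner_Integration.integrable_bound[OF ig]) (use im in auto)
  have c: "(cmod (\<integral>x. g x * complex_of_real (h n x) \<partial>lborel))^2
     = (\<integral>x. Re (g x) * h n x \<partial>lborel)^2 + (\<integral>x. Im (g x) * h n x \<partial>lborel)^2" for n
  proof -
    have gi: "integrable lborel (\<lambda>x. g x * complex_of_real (h n x))" by (rule gh_int[OF assms])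
    have "Re (\<integral>x. g x * complex_of_real (h n x) \<partial>lborel) = (\<integral>x. Re (g x) * h n x \<partial>lborel)"
      using integral_Re[OF gi] by simp
    moreover have "Im (\<integral>x. g x * complex_of_real (h n x) \<partial>lborel) = (\<integral>x. Im (g x) * h n x \<partial>lborel)"
      using integral_Im[OF gi] by simp
    ultimately show ?thesis by (simp add: cmod_power2)
  qed
  have "(\<Sum>n<M. (cmod (\<integral>x. g x * complex_of_real (h n x) \<partial>lborel))^2)
     = (\<Sum>n<M. (\<integral>x. Re (g x) * h n x \<partial>lborel)^2) + (\<Sum>n<M. (\<integral>x. Im (g x) * h n x \<partial>lborel)^2)"
    unfolding c by (simp add: sum.distrib)
  also have "\<dots> \<le> (\<integral>x. (Re (g x))^2 \<partial>lborel) + (\<integral>x. (Im (g x))^2 \<partial>lborel)"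
    by (intro add_mono bessel_real) (use iRe iIm in auto)
  also have "\<dots> = (\<integral>x. (cmod (g x))^2 \<partial>lborel)"
    using iRe iIm by (simp add: cmod_power2)
  finally show ?thesis .
qed

lemma fh:
  fixes f :: "real \<Rightarrow> complex" and \<psi> :: "real \<Rightarrow> real"
  assumes [measurable]: "f \<in> borel_measurable borel" "\<psi> \<in> borel_measurable borel"
    and iA: "integrable lborel (\<lambda>x. (cmod (f x))^2 * ((\<psi> x)^2 * w2 x))"
  shows "integrable lborel (\<lambda>x. f x * complex_of_real (\<psi> x * h n x)) \<and>
    cmod (\<integral>x. f x * complex_of_real (\<psi> x * h n x) \<partial>lborel)
      \<le> sqrt (\<integral>x. (cmod (f x))^2 * ((\<psi> x)^2 * w2 x) \<partial>lborel) * (sqrt 5 * (real n + 2))"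
proof -
  define u where "u x = cmod (f x) * \<bar>\<psi> x\<bar> / (1 + x^2)" for x
  define w where "w x = (1 + x^2) * \<bar>h n x\<bar>" for x
  have [measurable]: "u \<in> borel_measurable borel" "w \<in> borel_measurable borel"
    unfolding u_def[abs_def] w_def[abs_def] by measurable
  have pos: "0 < 1 + x^2" for x :: real by (simp add: add_pos_nonneg)
  have u2: "(u x)^2 = (cmod (f x))^2 * ((\<psi> x)^2 * w2 x)" for x
    unfolding u_def w2_def by (simp add: power_divide power_mult_distrib)
  have w2': "(w x)^2 = ((1 + x^2) * h n x)^2" for x
    unfolding w_def by (simp add: power_mult_distrib)
  have uw: "u x * w x = cmod (f x * complex_of_real (\<psi> x * h n x))" for x
    unfolding u_def w_def using pos[of x] by (simp add: norm_mult abs_mult)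
  have cs: "integrable lborel (\<lambda>x. u x * w x) \<and>
         (\<integral>x. u x * w x \<partial>lborel) \<le> sqrt (\<integral>x. (u x)^2 \<partial>lborel) * sqrt (\<integral>x. (w x)^2 \<partial>lborel)"
  proof (rule CS)
    show "integrable lborel (\<lambda>x. (u x)^2)" unfolding u2 by (rule iA)
    show "integrable lborel (\<lambda>x. (w x)^2)" unfolding w2' by (rule mom_int)
    show "0 \<le> u x" for x unfolding u_def using pos[of x] by simp
    show "0 \<le> w x" for x unfolding w_def using pos[of x] by simp
  qed auto
  have ni: "integrable lborel (\<lambda>x. cmod (f x * complex_of_real (\<psi> x * h n x)))"
    using cs unfolding uw by simp
  have int: "integrable lborel (\<lambda>x. f x * complex_of_real (\<psi> x * h n x))"
    by (rule Bochner_Integration.integrable_bound[OF ni]) auto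
  have "cmod (\<integral>x. f x * complex_of_real (\<psi> x * h n x) \<partial>lborel)
      \<le> (\<integral>x. cmod (f x * complex_of_real (\<psi> x * h n x)) \<partial>lborel)"
    by (rule integral_norm_bound)
  also have "\<dots> \<le> sqrt (\<integral>x. (u x)^2 \<partial>lborel) * sqrt (\<integral>x. (w x)^2 \<partial>lborel)"
    using cs unfolding uw by simp
  also have "sqrt (\<integral>x. (w x)^2 \<partial>lborel) \<le> sqrt 5 * (real n + 2)"
  proof -
    have "sqrt (\<integral>x. (w x)^2 \<partial>lborel) \<le> sqrt (5 * (real n + 2)^2)"
      unfolding w2' using mom_bound[of n] by simp
    also have "\<dots> = sqrt 5 * (real n + 2)" by (simp add: real_sqrt_mult)
    finally show ?thesis .
  qed
  then have "sqrt (\<integral>x. (u x)^2 \<partial>lborel) * sqrt (\<integral>x. (w x)^2 \<partial>lborel)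
       \<le> sqrt (\<integral>x. (u x)^2 \<partial>lborel) * (sqrt 5 * (real n + 2))"
    by (intro mult_left_mono) auto
  finally show ?thesis using int unfolding u2 by simp
qed

lemma exp_bound4: assumes "(y::real) > 0" shows "exp (-y) \<le> 256 / y^4"
proof -
  have "y / 4 \<le> exp (y / 4)" using exp_ge_add_one_self[of "y/4"] by linarith
  then have "(y / 4)^4 \<le> exp (y / 4) ^ 4" using assms by (intro power_mono) auto
  also have "exp (y / 4) ^ 4 = exp y" by (simp flip: exp_of_nat_mult)
  finally have "y^4 / 256 \<le> exp y" by (simp add: power_divide)
  then have "y^4 \<le> 256 * exp y" by simp
  then show ?thesis using assms by (simp add: exp_minus field_simps)
qed

lemma sum_inv_sq: "(\<Sum>n<M. 1 / (real n + 1)^2) \<le> 2 - 2 / (real M + 1)"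
proof (induction M)
  case (Suc M)
  have "1 / (real M + 1)^2 \<le> 2 / (real M + 1) - 2 / (real M + 2)"
  proof -
    have "2 / (real M + 1) - 2 / (real M + 2) = 2 / ((real M + 1) * (real M + 2))"
      by (simp add: field_simps)
    moreover have "1 / (real M + 1)^2 \<le> 2 / ((real M + 1) * (real M + 2))"
    proof -
      have "0 \<le> real M * real M" by simp
      then have le: "(real M + 1) * (real M + 2) \<le> 2 * (real M + 1)^2"
        by (simp add: power2_eq_square algebra_simps)
      have "2 / (2 * (real M + 1)^2) \<le> 2 / ((real M + 1) * (real M + 2))"
        by (rule frac_le) (use le in auto)
      then show ?thesis by simp
    qed
    ultimately show ?thesis by simp
  qed
  then show ?case using Suc by (simp add: add.commute)
qed simp

lemma sum_inv_sq2: "(\<Sum>n<M. 1 / (real n + 1)^2) \<le> 2"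
  using sum_inv_sq[of M] by (smt (verit) divide_nonneg_nonneg of_nat_0_le_iff)

lemma term_bound: assumes "s > 0"
  shows "exp (-(2 * s * (2 * real n + 1))) * (real n + 2)^2 \<le> 64 / s^4 * (1 / (real n + 1)^2)"
proof -
  have y: "2 * s * (2 * real n + 1) > 0" using assms by simp
  have "exp (-(2 * s * (2 * real n + 1))) \<le> 256 / (2 * s * (2 * real n + 1))^4"
    by (rule exp_bound4[OF y])
  also have "\<dots> \<le> 256 / (2 * s * (real n + 1))^4"
    using assms by (intro divide_left_mono power_mono mult_left_mono mult_pos_pos zero_less_power) auto
  finally have e: "exp (-(2 * s * (2 * real n + 1))) \<le> 16 / (s^4 * (real n + 1)^4)"
    by (simp add: power_mult_distrib)
  have "exp (-(2 * s * (2 * real n + 1))) * (real n + 2)^2 \<le> 16 / (s^4 * (real n + 1)^4) * (4 * (real n + 1)^2)"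
  proof (rule mult_mono[OF e])
    show "(real n + 2)^2 \<le> 4 * (real n + 1)^2" by (simp add: power2_eq_square algebra_simps)
  qed auto
  also have "\<dots> = 64 / s^4 * (1 / (real n + 1)^2)"
  proof -
    have g: "\<And>a. a > 0 \<Longrightarrow> 16 / (s^4 * a^4) * (4 * a^2) = 64 / s^4 * (1 / a^2)"
      using assms by (simp add: field_simps power2_eq_square power4_eq_xxxx)
    show ?thesis by (rule g) simp
  qed
  finally show ?thesis .
qed

lemma q_range: assumes "2 \<le> p" shows "0 \<le> inv_exp p" "inv_exp p \<le> 1/2"
proof -
  show "0 \<le> inv_exp p"
  proof (cases "p = \<infinity>")
    case False then obtain r where "p = ereal r" using assms by (cases p) auto
    then show ?thesis using assms by (simp add: inv_exp_def)
  qed (simp add: inv_exp_def)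
  show "inv_exp p \<le> 1/2"
  proof (cases "p = \<infinity>")
    case False then obtain r where "p = ereal r" using assms by (cases p) auto
    then show ?thesis using assms by (simp add: inv_exp_def field_simps)
  qed (simp add: inv_exp_def)
qed

lemma Lp_norm_nonneg: assumes "memLp p f" shows "0 \<le> Lp_norm p f"
proof (cases "p = \<infinity>")
  case True then show ?thesis using Linf_bound(2) assms by simp
qed (simp add: Lp_norm_def)

lemma coeff_bound:
  assumes p: "2 \<le> p" and f: "memLp p f"
  shows "integrable lborel (\<lambda>x. f x * complex_of_real (h n x)) \<and>
         cmod (hermite_coeff f n) \<le> sqrt 15 * Lp_norm p f * (real n + 2)"
proof -
  have [measurable]: "f \<in> borel_measurable borel" using f memLp_meas by blast
  define q where "q = inv_exp p"
  define N where "N = Lp_norm p f"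
  have q0: "0 \<le> q" "q \<le> 1/2" using q_range[OF p] q_def by auto
  have N0: "0 \<le> N" unfolding N_def by (rule Lp_norm_nonneg[OF f])
  have hl: "integrable lborel (\<lambda>x. (cmod (f x))^2 * w2 x) \<and>
      (\<integral>x. (cmod (f x))^2 * w2 x \<partial>lborel) \<le> N^2 * 3 powr (1 - 2 * q) * 1 powr (2 * q)"
    unfolding N_def q_def
    by (rule HL[OF p f]) (use w2_nonneg w2_le1 w2_int in auto)
  have "3 powr (1 - 2 * q) \<le> 3 powr 1" using q0 by (intro powr_mono) auto
  then have A3: "(\<integral>x. (cmod (f x))^2 * w2 x \<partial>lborel) \<le> 3 * N^2"
  proof -
    have "N^2 * 3 powr (1 - 2 * q) \<le> N^2 * 3" using \<open>3 powr (1 - 2 * q) \<le> 3 powr 1\<close>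
      by (intro mult_left_mono) auto
    then show ?thesis using hl by (simp add: mult.commute)
  qed
  have fh1: "integrable lborel (\<lambda>x. f x * complex_of_real (1 * h n x)) \<and>
    cmod (\<integral>x. f x * complex_of_real (1 * h n x) \<partial>lborel)
      \<le> sqrt (\<integral>x. (cmod (f x))^2 * ((1)^2 * w2 x) \<partial>lborel) * (sqrt 5 * (real n + 2))"
    by (rule fh) (use hl in auto)
  have "sqrt (\<integral>x. (cmod (f x))^2 * w2 x \<partial>lborel) \<le> sqrt (3 * N^2)"
    using A3 by simp
  also have "\<dots> = sqrt 3 * N" using N0 by (simp add: real_sqrt_mult)
  finally have s3: "sqrt (\<integral>x. (cmod (f x))^2 * w2 x \<partial>lborel) \<le> sqrt 3 * N" .
  have "cmod (hermite_coeff f n) \<le> sqrt 3 * N * (sqrt 5 * (real n + 2))"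
  proof -
    have "cmod (hermite_coeff f n) \<le> sqrt (\<integral>x. (cmod (f x))^2 * w2 x \<partial>lborel) * (sqrt 5 * (real n + 2))"
      using fh1 unfolding hermite_coeff_def by simp
    also have "\<dots> \<le> sqrt 3 * N * (sqrt 5 * (real n + 2))"
      using s3 by (intro mult_right_mono) auto
    finally show ?thesis .
  qed
  also have "\<dots> = sqrt 15 * N * (real n + 2)"
    by (simp add: real_sqrt_mult[symmetric])
  finally show ?thesis using fh1 unfolding N_def by simp
qed

lemma powr_recip: "0 < (s::real) \<Longrightarrow> (1 / s) powr a = s powr (- a)"
  by (simp add: powr_divide powr_minus_divide)

lemma core_small:
  assumes p: "2 \<le> p" and f: "memLp p f" and s: "0 < s" "s \<le> 1"
  shows "(\<Sum>n<M. exp (-(2 * s * (2 * real n + 1))) * (cmod (hermite_coeff f n))^2)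
     \<le> 1300 * (Lp_norm p f)^2 * s powr (-1 + 2 * inv_exp p)"
proof -
  have [measurable]: "f \<in> borel_measurable borel" using f memLp_meas by blast
  define q where "q = inv_exp p"
  define N where "N = Lp_norm p f"
  have q0: "0 \<le> q" "q \<le> 1/2" using q_range[OF p] q_def by auto
  have N0: "0 \<le> N" unfolding N_def by (rule Lp_norm_nonneg[OF f])
  define R where "R = 1 / s"
  have R1: "R \<ge> 1" and R0: "R > 0" unfolding R_def using s by auto
  define \<psi>i where "\<psi>i x = (indicator {-R..R} x :: real)" for x
  define \<psi>o where "\<psi>o x = 1 - \<psi>i x" for x
  have [measurable]: "\<psi>i \<in> borel_measurable borel" "\<psi>o \<in> borel_measurable borel"
    unfolding \<psi>i_def[abs_def] \<psi>o_def[abs_def] by measurable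
  have hl2: "integrable lborel (\<lambda>x. (cmod (f x))^2 * w2 x)"
    using HL[OF p f, of w2 1 3] w2_nonneg w2_le1 w2_int by auto
  have \<psi>01: "\<psi>i x \<in> {0, 1}" "\<psi>o x \<in> {0, 1}" for x
    unfolding \<psi>o_def \<psi>i_def by (auto split: split_indicator)
  have intpsi: "integrable lborel (\<lambda>x. (cmod (f x))^2 * ((\<psi> x)^2 * w2 x))"
    if "\<psi> \<in> borel_measurable borel" "\<And>x. \<psi> x \<in> {0, 1}" for \<psi>
  proof (rule Bochner_Integration.integrable_bound[OF hl2])
    show "AE x in lborel. norm ((cmod (f x))^2 * ((\<psi> x)^2 * w2 x)) \<le> norm ((cmod (f x))^2 * w2 x)"
    proof (intro AE_I2)
      fix x
      show "norm ((cmod (f x))^2 * ((\<psi> x)^2 * w2 x)) \<le> norm ((cmod (f x))^2 * w2 x)"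
        using that(2)[of x] w2_nonneg[of x] by (auto simp: abs_mult)
    qed
  qed (use that in simp)
  define d where "d n = (\<integral>x. f x * complex_of_real (\<psi>i x * h n x) \<partial>lborel)" for n
  define e where "e n = (\<integral>x. f x * complex_of_real (\<psi>o x * h n x) \<partial>lborel)" for n
  have fhi: "integrable lborel (\<lambda>x. f x * complex_of_real (\<psi>i x * h n x)) \<and>
    cmod (d n) \<le> sqrt (\<integral>x. (cmod (f x))^2 * ((\<psi>i x)^2 * w2 x) \<partial>lborel) * (sqrt 5 * (real n + 2))" for n
    unfolding d_def by (rule fh) (use intpsi \<psi>01 in auto)
  have fho: "integrable lborel (\<lambda>x. f x * complex_of_real (\<psi>o x * h n x)) \<and>
    cmod (e n) \<le> sqrt (\<integral>x. (cmod (f x))^2 * ((\<psi>o x)^2 * w2 x) \<partial>lborel) * (sqrt 5 * (real n + 2))" for n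
    unfolding e_def by (rule fh) (use intpsi \<psi>01 in auto)
  have cde: "hermite_coeff f n = d n + e n" for n
  proof -
    have "hermite_coeff f n = (\<integral>x. f x * complex_of_real (\<psi>i x * h n x) + f x * complex_of_real (\<psi>o x * h n x) \<partial>lborel)"
      unfolding hermite_coeff_def
      by (rule Bochner_Integration.integral_cong) (auto simp: \<psi>o_def algebra_simps)
    also have "\<dots> = d n + e n" unfolding d_def e_def using fhi fho by simp
    finally show ?thesis .
  qed
  define g where "g x = f x * complex_of_real (\<psi>i x)" for x
  have [measurable]: "g \<in> borel_measurable borel" unfolding g_def[abs_def] by measurable
  have g2: "(cmod (g x))^2 = (cmod (f x))^2 * \<psi>i x" for x
    using \<psi>01(1)[of x] unfolding g_def by (auto simp: norm_mult)
  have hli: "integrable lborel (\<lambda>x. (cmod (f x))^2 * \<psi>i x) \<and>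
      (\<integral>x. (cmod (f x))^2 * \<psi>i x \<partial>lborel) \<le> N^2 * (2 * R) powr (1 - 2 * q) * 1 powr (2 * q)"
    unfolding N_def q_def
    by (rule HL[OF p f]) (use ind_int[OF R0] R0 \<psi>01 in \<open>auto simp: \<psi>i_def\<close>)
  have "(2 * R) powr (1 - 2 * q) = 2 powr (1 - 2 * q) * s powr (-1 + 2 * q)"
    unfolding R_def using s by (subst powr_mult) (auto simp: powr_recip)
  also have "\<dots> \<le> 2 * s powr (-1 + 2 * q)"
  proof -
    have "2 powr (1 - 2 * q) \<le> 2 powr 1" using q0 by (intro powr_mono) auto
    then show ?thesis by (intro mult_right_mono) auto
  qed
  finally have twoR: "(2 * R) powr (1 - 2 * q) \<le> 2 * s powr (-1 + 2 * q)" .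
  have inner: "(\<Sum>n<M. (cmod (d n))^2) \<le> 2 * N^2 * s powr (-1 + 2 * q)"
  proof -
    have dg: "d n = (\<integral>x. g x * complex_of_real (h n x) \<partial>lborel)" for n
      unfolding d_def g_def by (simp add: mult.assoc)
    have "(\<Sum>n<M. (cmod (d n))^2) \<le> (\<integral>x. (cmod (g x))^2 \<partial>lborel)"
      unfolding dg by (rule bessel_complex) (use hli in \<open>auto simp: g2\<close>)
    also have "\<dots> \<le> N^2 * (2 * R) powr (1 - 2 * q)" using hli by (simp add: g2)
    also have "\<dots> \<le> N^2 * (2 * s powr (-1 + 2 * q))" using twoR by (intro mult_left_mono) auto
    finally show ?thesis by simp
  qed
  have w3eq: "(\<psi>o x)^2 * w2 x = w3 R x" for x
    unfolding \<psi>o_def \<psi>i_def w3_def w2_def by (auto split: split_indicator)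
  have hlo: "integrable lborel (\<lambda>x. (cmod (f x))^2 * w3 R x) \<and>
      (\<integral>x. (cmod (f x))^2 * w3 R x \<partial>lborel) \<le> N^2 * (2 / (3 * R^3)) powr (1 - 2 * q) * (1 / R^4) powr (2 * q)"
    unfolding N_def q_def
    by (rule HL[OF p f]) (use w3_int[OF R0] w3_le[OF R0] w3_nonneg R0 in auto)
  have "(2 / (3 * R^3)) powr (1 - 2 * q) \<le> (s^3) powr (1 - 2 * q)"
  proof (rule powr_mono2)
    show "2 / (3 * R^3) \<le> s^3" unfolding R_def using s by (simp add: field_simps power_divide)
  qed (use q0 R0 in auto)
  also have "(s^3) powr (1 - 2 * q) = s powr (3 - 6 * q)"
  proof -
    have "s powr 3 = s^3" using powr_realpow[of s 3] s by simp
    then have "(s^3) powr (1 - 2 * q) = s powr (3 * (1 - 2 * q))" by (metis powr_powr)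
    then show ?thesis by (simp add: algebra_simps)
  qed
  finally have t1: "(2 / (3 * R^3)) powr (1 - 2 * q) \<le> s powr (3 - 6 * q)" .
  have t2: "(1 / R^4) powr (2 * q) = s powr (8 * q)"
  proof -
    have "1 / R^4 = s^4" unfolding R_def by (simp add: power_divide)
    moreover have "s powr 4 = s^4" using powr_realpow[of s 4] s by simp
    ultimately have "(1 / R^4) powr (2 * q) = s powr (4 * (2 * q))" by (metis powr_powr)
    then show ?thesis by (simp add: algebra_simps)
  qed
  have Bo: "(\<integral>x. (cmod (f x))^2 * ((\<psi>o x)^2 * w2 x) \<partial>lborel) \<le> N^2 * s powr (3 + 2 * q)"
  proof -
    have "(\<integral>x. (cmod (f x))^2 * ((\<psi>o x)^2 * w2 x) \<partial>lborel) = (\<integral>x. (cmod (f x))^2 * w3 R x \<partial>lborel)"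
      by (simp add: w3eq)
    also have "\<dots> \<le> N^2 * (2 / (3 * R^3)) powr (1 - 2 * q) * (1 / R^4) powr (2 * q)" using hlo by simp
    also have "\<dots> \<le> N^2 * s powr (3 - 6 * q) * s powr (8 * q)"
      unfolding t2 using t1 by (intro mult_right_mono mult_left_mono) auto
    also have "\<dots> = N^2 * s powr (3 - 6 * q + 8 * q)" by (simp only: powr_add mult.assoc)
    also have "3 - 6 * q + 8 * q = 3 + 2 * q" by simp
    finally show ?thesis .
  qed
  have eb: "(cmod (e n))^2 \<le> 5 * N^2 * s powr (3 + 2 * q) * (real n + 2)^2" for n
  proof -
    define B where "B = (\<integral>x. (cmod (f x))^2 * ((\<psi>o x)^2 * w2 x) \<partial>lborel)"
    have B0: "0 \<le> B" unfolding B_def by (intro integral_nonneg_AE AE_I2) (simp add: w2_nonneg)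
    have "(cmod (e n))^2 \<le> (sqrt B * (sqrt 5 * (real n + 2)))^2"
      using fho[of n] unfolding B_def by (intro power_mono) auto
    also have "\<dots> = B * 5 * (real n + 2)^2" using B0 by (simp add: power_mult_distrib)
    also have "\<dots> \<le> N^2 * s powr (3 + 2 * q) * 5 * (real n + 2)^2"
      using Bo unfolding B_def[symmetric] by (intro mult_right_mono) auto
    finally show ?thesis by (simp add: mult_ac)
  qed
  have outer: "(\<Sum>n<M. exp (-(2 * s * (2 * real n + 1))) * (cmod (e n))^2) \<le> 640 * N^2 * s powr (-1 + 2 * q)"
  proof -
    have "(\<Sum>n<M. exp (-(2 * s * (2 * real n + 1))) * (cmod (e n))^2)
        \<le> (\<Sum>n<M. 5 * N^2 * s powr (3 + 2 * q) * (exp (-(2 * s * (2 * real n + 1))) * (real n + 2)^2))"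
      by (intro sum_mono) (use eb in \<open>auto simp: mult_ac intro!: mult_left_mono\<close>)
    also have "\<dots> \<le> (\<Sum>n<M. 5 * N^2 * s powr (3 + 2 * q) * (64 / s^4 * (1 / (real n + 1)^2)))"
      by (intro sum_mono mult_left_mono term_bound[OF s(1)]) auto
    also have "\<dots> = 5 * N^2 * s powr (3 + 2 * q) * (64 / s^4) * (\<Sum>n<M. 1 / (real n + 1)^2)"
      by (simp only: sum_distrib_left mult.assoc)
    also have "\<dots> \<le> 5 * N^2 * s powr (3 + 2 * q) * (64 / s^4) * 2"
      by (intro mult_left_mono sum_inv_sq2) (use s in auto)
    also have "\<dots> = 10 * N^2 * (s powr (3 + 2 * q) * (64 / s^4))" by (simp add: algebra_simps)
    also have "s powr (3 + 2 * q) * (64 / s^4) = 64 * s powr (-1 + 2 * q)"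
    proof -
      have "s^4 = s powr 4" using powr_realpow[of s 4] s by simp
      then have "s powr (3 + 2 * q) / s^4 = s powr (3 + 2 * q - 4)"
        by (simp only: powr_diff)
      also have "3 + 2 * q - 4 = -1 + 2 * q" by simp
      finally have "s powr (3 + 2 * q) / s^4 = s powr (-1 + 2 * q)" .
      then show ?thesis by (simp add: field_simps)
    qed
    finally show ?thesis by (simp add: mult_ac)
  qed
  have ce: "exp (-(2 * s * (2 * real n + 1))) * (cmod (hermite_coeff f n))^2
     \<le> 2 * (cmod (d n))^2 + 2 * (exp (-(2 * s * (2 * real n + 1))) * (cmod (e n))^2)" for n
  proof -
    have "(cmod (hermite_coeff f n))^2 \<le> (cmod (d n) + cmod (e n))^2"
      unfolding cde by (intro power_mono norm_triangle_ineq) auto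
    also have "\<dots> \<le> 2 * (cmod (d n))^2 + 2 * (cmod (e n))^2"
      using sum_squares_ge_zero[of "cmod (d n) - cmod (e n)" 0]
      by (simp add: power2_eq_square algebra_simps)
    finally have c2: "(cmod (hermite_coeff f n))^2 \<le> 2 * (cmod (d n))^2 + 2 * (cmod (e n))^2" .
    have ex: "exp (-(2 * s * (2 * real n + 1))) \<le> 1" using s by simp
    have "exp (-(2 * s * (2 * real n + 1))) * (cmod (hermite_coeff f n))^2
        \<le> exp (-(2 * s * (2 * real n + 1))) * (2 * (cmod (d n))^2 + 2 * (cmod (e n))^2)"
      using c2 by (intro mult_left_mono) auto
    also have "\<dots> = 2 * (exp (-(2 * s * (2 * real n + 1))) * (cmod (d n))^2) + 2 * (exp (-(2 * s * (2 * real n + 1))) * (cmod (e n))^2)"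
      by (simp add: algebra_simps)
    also have "\<dots> \<le> 2 * (cmod (d n))^2 + 2 * (exp (-(2 * s * (2 * real n + 1))) * (cmod (e n))^2)"
    proof -
      have "exp (-(2 * s * (2 * real n + 1))) * (cmod (d n))^2 \<le> (cmod (d n))^2"
        by (rule mult_left_le_one_le) (use ex in auto)
      then show ?thesis by simp
    qed
    finally show ?thesis .
  qed
  have "(\<Sum>n<M. exp (-(2 * s * (2 * real n + 1))) * (cmod (hermite_coeff f n))^2)
      \<le> (\<Sum>n<M. 2 * (cmod (d n))^2 + 2 * (exp (-(2 * s * (2 * real n + 1))) * (cmod (e n))^2))"
    by (intro sum_mono ce)
  also have "\<dots> = 2 * (\<Sum>n<M. (cmod (d n))^2) + 2 * (\<Sum>n<M. exp (-(2 * s * (2 * real n + 1))) * (cmod (e n))^2)"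
    by (simp add: sum.distrib sum_distrib_left)
  also have "\<dots> \<le> 2 * (2 * N^2 * s powr (-1 + 2 * q)) + 2 * (640 * N^2 * s powr (-1 + 2 * q))"
    using inner outer by linarith
  also have "\<dots> \<le> 1300 * N^2 * s powr (-1 + 2 * q)" by simp
  finally show ?thesis unfolding N_def q_def .
qed


lemma core:
  assumes p: "2 \<le> p" and f: "memLp p f" and s: "0 < s"
  shows "(\<Sum>n<M. exp (-(2 * s * (2 * real n + 1))) * (cmod (hermite_coeff f n))^2)
     \<le> 1300 * (Lp_norm p f)^2 * s powr (-1 + 2 * inv_exp p)"
proof (cases "s \<le> 1")
  case True then show ?thesis using core_small[OF p f s] by simp
next
  case False
  then have s1: "s > 1" by simp
  define q where "q = inv_exp p"
  define N where "N = Lp_norm p f"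
  have q0: "0 \<le> q" "q \<le> 1/2" using q_range[OF p] q_def by auto
  have ex: "exp (-(2 * s * (2 * real n + 1))) \<le> exp (-(2 * (s - 1))) * exp (-(2 * 1 * (2 * real n + 1)))" for n
  proof -
    have "real n \<le> s * real n" using s1 by (simp add: mult_le_cancel_right1)
    then have "2 * (s - 1) + 2 * 1 * (2 * real n + 1) \<le> 2 * s * (2 * real n + 1)"
      using s1 by (simp add: algebra_simps)
    then show ?thesis by (simp flip: exp_add)
  qed
  have "(\<Sum>n<M. exp (-(2 * s * (2 * real n + 1))) * (cmod (hermite_coeff f n))^2)
      \<le> (\<Sum>n<M. exp (-(2 * (s - 1))) * (exp (-(2 * 1 * (2 * real n + 1))) * (cmod (hermite_coeff f n))^2))"
    by (intro sum_mono) (use ex in \<open>auto simp: mult.assoc[symmetric] intro!: mult_right_mono\<close>)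
  also have "\<dots> = exp (-(2 * (s - 1))) * (\<Sum>n<M. exp (-(2 * 1 * (2 * real n + 1))) * (cmod (hermite_coeff f n))^2)"
    by (simp add: sum_distrib_left)
  also have "\<dots> \<le> exp (-(2 * (s - 1))) * (1300 * N^2 * 1 powr (-1 + 2 * q))"
    unfolding N_def q_def by (intro mult_left_mono core_small[OF p f]) auto
  also have "\<dots> = 1300 * N^2 * exp (-(2 * (s - 1)))" by simp
  also have "\<dots> \<le> 1300 * N^2 * s powr (-1 + 2 * q)"
  proof (intro mult_left_mono)
    have "s \<le> 1 + 2 * (s - 1)" using s1 by simp
    also have "\<dots> \<le> exp (2 * (s - 1))" by (rule exp_ge_add_one_self)
    finally have se: "s \<le> exp (2 * (s - 1))" .
    have "exp (-(2 * (s - 1))) = 1 / exp (2 * (s - 1))" using exp_minus[of "2 * (s - 1)"] by (simp add: divide_inverse)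
    also have "\<dots> \<le> 1 / s" by (rule divide_left_mono[OF se]) (use s in auto)
    finally have "exp (-(2 * (s - 1))) \<le> 1 / s" .
    also have "1 / s = s powr (-1)" using s by (simp add: powr_minus_divide)
    also have "\<dots> \<le> s powr (-1 + 2 * q)" using s1 q0 by (intro powr_mono) auto
    finally show "exp (-(2 * (s - 1))) \<le> s powr (-1 + 2 * q)" .
  qed auto
  finally show ?thesis unfolding N_def q_def .
qed

lemma summable_coeff:
  fixes b :: "nat \<Rightarrow> real"
  assumes s: "0 < s" and b0: "\<And>n. 0 \<le> b n" and K: "0 \<le> K"
    and bb: "\<And>n. b n \<le> exp (-(s * (2 * real n + 1))) * (K * (real n + 2))"
  shows "summable b"
proof (rule summableI_nonneg_bounded[OF b0])
  fix M
  have t: "b n \<le> K * (64 / (s/2)^4) * (1 / (real n + 1)^2)" for n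
  proof -
    have "b n \<le> K * (exp (-(2 * (s/2) * (2 * real n + 1))) * (real n + 2))"
      using bb[of n] by (simp add: mult_ac)
    also have "\<dots> \<le> K * (exp (-(2 * (s/2) * (2 * real n + 1))) * (real n + 2)^2)"
      using K by (intro mult_left_mono) (auto simp: power2_eq_square)
    also have "\<dots> \<le> K * (64 / (s/2)^4 * (1 / (real n + 1)^2))"
      using K by (intro mult_left_mono term_bound) (use s in auto)
    finally show ?thesis by (simp add: mult_ac)
  qed
  have "(\<Sum>n<M. b n) \<le> (\<Sum>n<M. K * (64 / (s/2)^4) * (1 / (real n + 1)^2))"
    by (intro sum_mono t)
  also have "\<dots> = K * (64 / (s/2)^4) * (\<Sum>n<M. 1 / (real n + 1)^2)"
    by (simp add: sum_distrib_left)
  also have "\<dots> \<le> K * (64 / (s/2)^4) * 2"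
    using K s by (intro mult_left_mono sum_inv_sq2) auto
  finally show "(\<Sum>n<M. b n) \<le> K * (64 / (s/2)^4) * 2" .
qed

lemma E_props:
  fixes b :: "nat \<Rightarrow> real"
  assumes b0: "\<And>n. 0 \<le> b n" and sb: "summable b"
  shows "AE x in lborel. summable (\<lambda>n. b n * (h n x)^2)"
    and "integrable lborel (\<lambda>x. \<Sum>n. b n * (h n x)^2)"
proof -
  have ii: "integrable lborel (\<lambda>x. b n * (h n x)^2)" for n using h_sq_int by auto
  have nnI: "(\<integral>\<^sup>+x. ennreal (b n * (h n x)^2) \<partial>lborel) = ennreal (b n)" for n
  proof -
    have "(\<integral>\<^sup>+x. ennreal (b n * (h n x)^2) \<partial>lborel) = ennreal (\<integral>x. b n * (h n x)^2 \<partial>lborel)"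
      by (rule nn_integral_eq_integral[OF ii]) (use b0 in auto)
    also have "(\<integral>x. b n * (h n x)^2 \<partial>lborel) = b n" using h_sq_integral by simp
    finally show ?thesis .
  qed
  have "(\<integral>\<^sup>+x. (\<Sum>n. ennreal (b n * (h n x)^2)) \<partial>lborel) = (\<Sum>n. ennreal (b n))"
    by (subst nn_integral_suminf) (auto simp: nnI)
  also have "\<dots> = ennreal (suminf b)" by (rule suminf_ennreal2[OF b0 sb])
  finally have fin: "(\<integral>\<^sup>+x. (\<Sum>n. ennreal (b n * (h n x)^2)) \<partial>lborel) \<noteq> \<infinity>" by simp
  have "AE x in lborel. (\<Sum>n. ennreal (b n * (h n x)^2)) \<noteq> \<infinity>"
    by (rule nn_integral_noteq_infinite[OF _ fin]) measurable
  then show ae: "AE x in lborel. summable (\<lambda>n. b n * (h n x)^2)"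
    by eventually_elim (rule summable_suminf_not_top, use b0 in auto)
  show "integrable lborel (\<lambda>x. \<Sum>n. b n * (h n x)^2)"
  proof (rule integrable_suminf[OF ii])
    show "AE x in lborel. summable (\<lambda>n. norm (b n * (h n x)^2))"
      using ae by eventually_elim (use b0 in simp)
    show "summable (\<lambda>n. \<integral>x. norm (b n * (h n x)^2) \<partial>lborel)"
    proof -
      have "(\<integral>x. norm (b n * (h n x)^2) \<partial>lborel) = b n" for n
        using b0[of n] h_sq_integral[of n] by simp
      then show ?thesis using sb by simp
    qed
  qed
qed

lemma pw_bound:
  fixes a :: "nat \<Rightarrow> complex"
  assumes sa: "summable (\<lambda>n. cmod (a n))" and se: "summable (\<lambda>n. cmod (a n) * (h n x)^2)"
  shows "summable (\<lambda>n. norm (a n * complex_of_real (h n x)))"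
    and "(cmod (\<Sum>n<N. a n * complex_of_real (h n x)))^2 \<le> (\<Sum>n. cmod (a n)) * (\<Sum>n. cmod (a n) * (h n x)^2)"
proof -
  have hb: "\<bar>y\<bar> \<le> 1 + y^2" for y :: real
  proof (cases "\<bar>y\<bar> \<le> 1")
    case False then have "\<bar>y\<bar> * 1 \<le> \<bar>y\<bar> * \<bar>y\<bar>" by (intro mult_left_mono) auto
    then have "\<bar>y\<bar> \<le> y^2" by (simp add: power2_eq_square abs_mult_self)
    then show ?thesis by simp
  qed (simp add: add_increasing2)
  show sn: "summable (\<lambda>n. norm (a n * complex_of_real (h n x)))"
  proof (rule summable_comparison_test[OF _ summable_add[OF sa se]])
    show "\<exists>N. \<forall>n\<ge>N. norm (norm (a n * complex_of_real (h n x))) \<le> cmod (a n) + cmod (a n) * (h n x)^2"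
    proof (intro exI allI impI)
      fix n
      have "cmod (a n) * \<bar>h n x\<bar> \<le> cmod (a n) * (1 + (h n x)^2)" by (intro mult_left_mono hb) simp
      then show "norm (norm (a n * complex_of_real (h n x))) \<le> cmod (a n) + cmod (a n) * (h n x)^2"
        by (simp add: norm_mult algebra_simps)
    qed
  qed
  have "cmod (\<Sum>n<N. a n * complex_of_real (h n x)) \<le> (\<Sum>n<N. cmod (a n) * \<bar>h n x\<bar>)"
    by (rule order_trans[OF norm_sum]) (simp add: norm_mult)
  then have "(cmod (\<Sum>n<N. a n * complex_of_real (h n x)))^2 \<le> (\<Sum>n<N. cmod (a n) * \<bar>h n x\<bar>)^2"
    by (intro power_mono) auto
  also have "(\<Sum>n<N. cmod (a n) * \<bar>h n x\<bar>) = (\<Sum>n<N. sqrt (cmod (a n)) * (sqrt (cmod (a n)) * \<bar>h n x\<bar>))"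
    by (intro sum.cong refl) (simp add: mult.assoc[symmetric])
  also have "(\<dots>)^2 \<le> (\<Sum>n<N. (sqrt (cmod (a n)))^2) * (\<Sum>n<N. (sqrt (cmod (a n)) * \<bar>h n x\<bar>)^2)"
    by (rule Cauchy_Schwarz_ineq_sum)
  also have "\<dots> = (\<Sum>n<N. cmod (a n)) * (\<Sum>n<N. cmod (a n) * (h n x)^2)"
    by (simp add: power_mult_distrib)
  also have "\<dots> \<le> (\<Sum>n. cmod (a n)) * (\<Sum>n. cmod (a n) * (h n x)^2)"
  proof (intro mult_mono)
    show "(\<Sum>n<N. cmod (a n)) \<le> (\<Sum>n. cmod (a n))" by (rule sum_le_suminf[OF sa]) auto
    show "(\<Sum>n<N. cmod (a n) * (h n x)^2) \<le> (\<Sum>n. cmod (a n) * (h n x)^2)" by (rule sum_le_suminf[OF se]) auto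
    show "0 \<le> (\<Sum>n. cmod (a n))" by (rule suminf_nonneg[OF sa]) auto
    show "0 \<le> (\<Sum>n<N. cmod (a n) * (h n x)^2)" by (intro sum_nonneg) auto
  qed
  finally show "(cmod (\<Sum>n<N. a n * complex_of_real (h n x)))^2 \<le> (\<Sum>n. cmod (a n)) * (\<Sum>n. cmod (a n) * (h n x)^2)" .
qed

lemma main_t:
  fixes \<gamma> t :: real and p :: ereal and f :: "real \<Rightarrow> complex"
  assumes \<gamma>: "0 < \<gamma>" and p: "2 \<le> p" and t: "0 < t" and f: "memLp p f"
  shows "\<exists>g. semigroup_image ((\<i> + complex_of_real \<gamma>) * complex_of_real t) f g \<and>
     Lp_norm 2 g \<le> sqrt 1300 * Lp_norm p f * (\<gamma> * t) powr (- 1 / 2 + inv_exp p)"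
proof -
  have [measurable]: "f \<in> borel_measurable borel" using f memLp_meas by blast
  define z where "z = (\<i> + complex_of_real \<gamma>) * complex_of_real t"
  define s where "s = \<gamma> * t"
  have s0: "0 < s" unfolding s_def using \<gamma> t by simp
  define N where "N = Lp_norm p f"
  define q where "q = inv_exp p"
  have N0: "0 \<le> N" unfolding N_def by (rule Lp_norm_nonneg[OF f])
  define c where "c n = hermite_coeff f n" for n
  define a where "a n = exp (- z * of_nat (2 * n + 1)) * c n" for n
  have na: "cmod (a n) = exp (-(s * (2 * real n + 1))) * cmod (c n)" for n
  proof -
    have "Re (- z * of_nat (2 * n + 1)) = -(s * (2 * real n + 1))"
      unfolding z_def s_def by (simp add: algebra_simps)
    then show ?thesis unfolding a_def by (simp add: norm_mult)
  qed
  have na2: "(cmod (a n))^2 = exp (-(2 * s * (2 * real n + 1))) * (cmod (c n))^2" for n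
  proof -
    have "(exp (-(s * (2 * real n + 1))))^2 = exp (-(2 * s * (2 * real n + 1)))"
      by (simp add: power2_eq_square flip: exp_add)
    then show ?thesis unfolding na by (simp add: power_mult_distrib)
  qed
  have sa: "summable (\<lambda>n. cmod (a n))"
  proof (rule summable_coeff[OF s0, where K="sqrt 15 * N"])
    show "cmod (a n) \<le> exp (-(s * (2 * real n + 1))) * (sqrt 15 * N * (real n + 2))" for n
      unfolding na c_def N_def using coeff_bound[OF p f, of n] by (intro mult_left_mono) auto
  qed (use N0 in auto)
  define A where "A = (\<Sum>n. cmod (a n))"
  have A0: "0 \<le> A" unfolding A_def by (rule suminf_nonneg[OF sa]) auto
  define E where "E x = (\<Sum>n. cmod (a n) * (h n x)^2)" for x
  have AEgood: "AE x in lborel. summable (\<lambda>n. cmod (a n) * (h n x)^2)"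
    and Eint: "integrable lborel E"
    using E_props[of "\<lambda>n. cmod (a n)"] sa unfolding E_def[abs_def] by auto
  define S where "S N x = (\<Sum>n<N. a n * complex_of_real (h n x))" for N x
  have [measurable]: "S N \<in> borel_measurable borel" for N unfolding S_def[abs_def] by measurable
  define g where "g x = lim (\<lambda>N. S N x)" for x
  have [measurable]: "g \<in> borel_measurable borel" unfolding g_def[abs_def] by measurable
  have conv: "(\<lambda>N. S N x) \<longlonglongrightarrow> g x" if "summable (\<lambda>n. cmod (a n) * (h n x)^2)" for x
  proof -
    have "summable (\<lambda>n. a n * complex_of_real (h n x))"
      by (rule summable_norm_cancel[OF pw_bound(1)[OF sa that]])
    then have "(\<lambda>N. S N x) \<longlonglongrightarrow> (\<Sum>n. a n * complex_of_real (h n x))"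
      unfolding S_def by (rule summable_LIMSEQ)
    then show ?thesis unfolding g_def by (simp add: limI)
  qed
  have Sb: "(cmod (S N x))^2 \<le> A * E x" if "summable (\<lambda>n. cmod (a n) * (h n x)^2)" for N x
    unfolding S_def A_def E_def by (rule pw_bound(2)[OF sa that])
  have gb: "(cmod (g x))^2 \<le> A * E x" if "summable (\<lambda>n. cmod (a n) * (h n x)^2)" for x
  proof (rule LIMSEQ_le_const2)
    show "(\<lambda>N. (cmod (S N x))^2) \<longlonglongrightarrow> (cmod (g x))^2"
      by (intro tendsto_intros conv[OF that])
    show "\<exists>N0. \<forall>N\<ge>N0. (cmod (S N x))^2 \<le> A * E x" using Sb[OF that] by blast
  qed
  have AEint: "integrable lborel (\<lambda>x. A * E x)" using Eint by auto
  have dct1: "integrable lborel (\<lambda>x. (cmod (g x))^2) \<and>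
      (\<lambda>N. \<integral>x. (cmod (S N x))^2 \<partial>lborel) \<longlonglongrightarrow> (\<integral>x. (cmod (g x))^2 \<partial>lborel)"
  proof -
    have lim: "AE x in lborel. (\<lambda>N. (cmod (S N x))^2) \<longlonglongrightarrow> (cmod (g x))^2"
      using AEgood by eventually_elim (intro tendsto_intros conv)
    have bd: "AE x in lborel. norm ((cmod (S N x))^2) \<le> A * E x" for N
      using AEgood by eventually_elim (use Sb in simp)
    show ?thesis
      using integrable_dominated_convergence[OF _ _ AEint lim bd]
        integral_dominated_convergence[OF _ _ AEint lim bd] by auto
  qed
  have SI: "(\<integral>x. (cmod (S N x))^2 \<partial>lborel) = (\<Sum>n<N. (cmod (a n))^2)" for N
    using ON_complex[of a N] unfolding S_def by simp
  have gI: "(\<integral>x. (cmod (g x))^2 \<partial>lborel) \<le> 1300 * N^2 * s powr (-1 + 2 * q)"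
  proof (rule LIMSEQ_le_const2[OF dct1[THEN conjunct2]])
    show "\<exists>N0. \<forall>M\<ge>N0. (\<integral>x. (cmod (S M x))^2 \<partial>lborel) \<le> 1300 * N^2 * s powr (-1 + 2 * q)"
    proof (intro exI allI impI)
      fix M :: nat
      have "(\<integral>x. (cmod (S M x))^2 \<partial>lborel) = (\<Sum>n<M. exp (-(2 * s * (2 * real n + 1))) * (cmod (hermite_coeff f n))^2)"
        unfolding SI na2 c_def ..
      also have "\<dots> \<le> 1300 * N^2 * s powr (-1 + 2 * q)"
        unfolding N_def q_def by (rule core[OF p f s0])
      finally show "(\<integral>x. (cmod (S M x))^2 \<partial>lborel) \<le> 1300 * N^2 * s powr (-1 + 2 * q)" .
    qed
  qed
  have dct2: "(\<lambda>N. \<integral>x. (cmod (g x - S N x))^2 \<partial>lborel) \<longlonglongrightarrow> (\<integral>(x::real). 0 \<partial>lborel)"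
  proof (rule integral_dominated_convergence[where w="\<lambda>x. 4 * (A * E x)" and s="\<lambda>N x. (cmod (g x - S N x))^2" and f="\<lambda>x. 0"])
    show "integrable lborel (\<lambda>x. 4 * (A * E x))" using AEint by auto
    show "AE x in lborel. (\<lambda>N. (cmod (g x - S N x))^2) \<longlonglongrightarrow> 0"
      using AEgood
    proof eventually_elim
      case (elim x)
      have "(\<lambda>N. g x - S N x) \<longlonglongrightarrow> g x - g x" by (intro tendsto_intros conv[OF elim])
      then have "(\<lambda>N. (cmod (g x - S N x))^2) \<longlonglongrightarrow> (cmod (g x - g x))^2"
        by (rule tendsto_power[OF tendsto_norm])
      then show ?case by simp
    qed
    show "AE x in lborel. norm ((cmod (g x - S N x))^2) \<le> 4 * (A * E x)" for N
      using AEgood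
    proof eventually_elim
      case (elim x)
      have "(cmod (g x - S N x))^2 \<le> (cmod (g x) + cmod (S N x))^2"
        by (intro power_mono norm_triangle_ineq4) auto
      also have "\<dots> \<le> 2 * (cmod (g x))^2 + 2 * (cmod (S N x))^2"
        using sum_squares_ge_zero[of "cmod (g x) - cmod (S N x)" 0]
        by (simp add: power2_eq_square algebra_simps)
      also have "\<dots> \<le> 4 * (A * E x)" using gb[OF elim] Sb[OF elim, of N] by simp
      finally show ?case by simp
    qed
  qed auto
  have p2: "\<And>F :: real \<Rightarrow> complex. Lp_norm 2 F = (\<integral>x. (cmod (F x))^2 \<partial>lborel) powr (1/2)"
    by (simp add: Lp_norm_def powr2_nn)
  have sg: "semigroup_image z f g"
    unfolding semigroup_image_def
  proof
    show "memLp 2 g" unfolding memLp_def using dct1 by (simp add: powr2_nn)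
    have "(\<lambda>N. (\<integral>x. (cmod (g x - S N x))^2 \<partial>lborel) powr (1/2)) \<longlonglongrightarrow> 0"
    proof (rule tendsto_zero_powrI)
      show "(\<lambda>N. \<integral>x. (cmod (g x - S N x))^2 \<partial>lborel) \<longlonglongrightarrow> 0" using dct2 by simp
      show "\<forall>\<^sub>F N in sequentially. 0 \<le> (\<integral>x. (cmod (g x - S N x))^2 \<partial>lborel)"
        by (intro always_eventually allI integral_nonneg_AE) auto
    qed auto
    then show "(\<lambda>N. Lp_norm 2 (\<lambda>x. g x - (\<Sum>n<N. exp (- z * of_nat (2 * n + 1)) *
                          hermite_coeff f n * complex_of_real (hermite_fun n x)))) \<longlonglongrightarrow> 0"
      unfolding p2 S_def a_def c_def by simp
  qed
  have "Lp_norm 2 g = sqrt (\<integral>x. (cmod (g x))^2 \<partial>lborel)"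
    unfolding p2 by (rule powr_half_sqrt) (intro integral_nonneg_AE, auto)
  also have "\<dots> \<le> sqrt (1300 * N^2 * s powr (-1 + 2 * q))" using gI by simp
  also have "\<dots> = sqrt 1300 * N * s powr (- 1 / 2 + q)"
  proof -
    have "sqrt (s powr (-1 + 2 * q)) = s powr ((-1 + 2 * q) / 2)"
      using s0 by (simp add: powr_half_sqrt_powr)
    also have "(-1 + 2 * q) / 2 = - 1 / 2 + q" by simp
    finally show ?thesis using N0 by (simp add: real_sqrt_mult)
  qed
  finally show ?thesis using sg unfolding z_def s_def N_def q_def by blast
qed

theorem lemma6p1:
  fixes \<gamma> :: real and p :: ereal
  assumes "\<gamma> > 0" and "2 \<le> p"
  shows "\<exists>C. \<forall>t>0. \<forall>f. memLp p f \<longrightarrow>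
           (\<exists>g. semigroup_image ((\<i> + complex_of_real \<gamma>) * complex_of_real t) f g \<and>
                Lp_norm 2 g \<le> C * t powr (- 1 / 2 + inv_exp p) * Lp_norm p f)"
proof (intro exI[of _ "sqrt 1300 * \<gamma> powr (- 1 / 2 + inv_exp p)"] allI impI)
  fix t :: real and f :: "real \<Rightarrow> complex"
  assume t: "t > 0" and f: "memLp p f"
  obtain g where sg: "semigroup_image ((\<i> + complex_of_real \<gamma>) * complex_of_real t) f g"
    and gb: "Lp_norm 2 g \<le> sqrt 1300 * Lp_norm p f * (\<gamma> * t) powr (- 1 / 2 + inv_exp p)"
    using main_t[OF assms(1) assms(2) t f] by blast
  have "(\<gamma> * t) powr (- 1 / 2 + inv_exp p) = \<gamma> powr (- 1 / 2 + inv_exp p) * t powr (- 1 / 2 + inv_exp p)"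
    using assms(1) t by (simp add: powr_mult)
  then have "Lp_norm 2 g \<le> sqrt 1300 * \<gamma> powr (- 1 / 2 + inv_exp p) * t powr (- 1 / 2 + inv_exp p) * Lp_norm p f"
    using gb by (simp add: mult_ac)
  then show "\<exists>g. semigroup_image ((\<i> + complex_of_real \<gamma>) * complex_of_real t) f g \<and>
                Lp_norm 2 g \<le> sqrt 1300 * \<gamma> powr (- 1 / 2 + inv_exp p) * t powr (- 1 / 2 + inv_exp p) * Lp_norm p f"
    using sg by blast
qed

end
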